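(* Let $\xi\in\mathbb{C}$ satisfy $|\mathrm{Im}(\xi)|<a/2$, and define $$S_\xi(x,y)=\prod_{n=1}^N\frac{G_R(y_n-x_{n+1}-ia/2-\eta/2+\xi)}{G_L(y_n-x_n+ia/2+\eta/2+\xi)},\qquad x_{N+1}=x_1.$$ Then the operator on $L^2(E)$ given by $(\hat S_\xi f)(x)=\int_ES_\xi(x,y)f(y)\,d\lambda_E(y)$, $f\in L^2(E)$, is a Hilbert–Schmidt operator.
   Context: Fix $a_+,a_->0$, $a=(a_++a_-)/2$, $\eta\in\mathbb{R}$, $N\ge2$. The hyperbolic gamma function $G(z)$ is the meromorphic function on $\mathbb{C}$ given for $|\mathrm{Im}\,z|<a$ by $G(z)=\exp\Big(i\int_0^\infty\frac{dy}{y}\Big(\frac{\sin(2yz)}{2\sinh(a_+y)\sinh(a_-y)}-\frac{z}{a_+a_-y}\Big)\Big)$, extended meromorphically. With $\chi=\frac{\pi}{24}(a_+/a_-+a_-/a_+)$, $G_R(z)=G(z)\exp(i\chi+i\pi z^2/(2a_+a_-))$ and $G_L(z)=G(z)\exp(-i\chi-i\pi z^2/(2a_+a_-))$. $E=\{x\in\mathbb{R}^N: x_1+\cdots+x_N=0\}$ with the Euclidean structure inherited from $\mathbb{R}^N$ and its Lebesgue measure $\lambda_E$. *)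

theory Defs
  imports "HOL-Analysis.Analysis"
begin

text \<open>Hyperbolic gamma function, given by its integral representation, valid on the
  strip |Im z| < a = (ap + am)/2.  Only values in this strip are used below.\<close>
definition hgamma :: "real \<Rightarrow> real \<Rightarrow> complex \<Rightarrow> complex" where
  "hgamma ap am z = exp (\<i> * (LINT y:{0<..}|lborel.
      (sin (2 * complex_of_real y * z) / complex_of_real (2 * sinh (ap * y) * sinh (am * y))
       - z / complex_of_real (ap * am * y)) / complex_of_real y))"

definition hchi :: "real \<Rightarrow> real \<Rightarrow> real" where
  "hchi ap am = pi / 24 * (ap / am + am / ap)"

definition hgammaR :: "real \<Rightarrow> real \<Rightarrow> complex \<Rightarrow> complex" where
  "hgammaR ap am z = hgamma ap am z *
     exp (\<i> * complex_of_real (hchi ap am) + \<i> * complex_of_real pi * z\<^sup>2 / complex_of_real (2 * ap * am))"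

definition hgammaL :: "real \<Rightarrow> real \<Rightarrow> complex \<Rightarrow> complex" where
  "hgammaL ap am z = hgamma ap am z *
     exp (- \<i> * complex_of_real (hchi ap am) - \<i> * complex_of_real pi * z\<^sup>2 / complex_of_real (2 * ap * am))"

text \<open>Points of R^N are functions nat \<Rightarrow> real, extensional on {..<N}.
  The hyperplane E = {x. x_0 + ... + x_{N-1} = 0} is parametrised by its first N-1
  coordinates; embE is this parametrisation.\<close>
definition embE :: "nat \<Rightarrow> (nat \<Rightarrow> real) \<Rightarrow> (nat \<Rightarrow> real)" where
  "embE N u = restrict (\<lambda>i. if i < N - 1 then u i else - (\<Sum>j<N - 1. u j)) {..<N}"

text \<open>Lebesgue measure on E induced by the Euclidean structure of R^N:
  the pushforward of Lebesgue measure on R^(N-1) under embE, times the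
  Jacobian factor sqrt(det(I + 1 1^T)) = sqrt N.\<close>
definition lebesgueE :: "nat \<Rightarrow> (nat \<Rightarrow> real) measure" where
  "lebesgueE N = density (distr (PiM {..<N - 1} (\<lambda>_. lborel)) (PiM {..<N} (\<lambda>_. lborel)) (embE N))
                   (\<lambda>_. ennreal (sqrt (real N)))"

definition square_integrable :: "'a measure \<Rightarrow> ('a \<Rightarrow> complex) \<Rightarrow> bool" where
  "square_integrable M f \<longleftrightarrow> f \<in> borel_measurable M \<and> integrable M (\<lambda>x. (cmod (f x))\<^sup>2)"

text \<open>The integral operator with kernel K on L^2(M) is a (well-defined) Hilbert--Schmidt
  operator: it maps L^2(M) into L^2(M), and the sums of ||T e||^2 over finite orthonormal
  families e are uniformly bounded (equivalently, the sum over an orthonormal basis is finite).\<close>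
definition hilbert_schmidt_integral_op :: "'a measure \<Rightarrow> ('a \<Rightarrow> 'a \<Rightarrow> complex) \<Rightarrow> bool" where
  "hilbert_schmidt_integral_op M K \<longleftrightarrow>
     (\<forall>f. square_integrable M f \<longrightarrow>
        (AE x in M. integrable M (\<lambda>y. K x y * f y)) \<and>
        square_integrable M (\<lambda>x. LINT y|M. K x y * f y)) \<and>
     (\<exists>C::real. \<forall>es :: ('a \<Rightarrow> complex) list.
        (\<forall>e\<in>set es. square_integrable M e) \<and>
        (\<forall>i<length es. \<forall>j<length es.
            (LINT x|M. (es!i) x * cnj ((es!j) x)) = (if i = j then 1 else 0)) \<longrightarrow>
        (\<Sum>e\<leftarrow>es. LINT x|M. (cmod (LINT y|M. K x y * e y))\<^sup>2) \<le> C)"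

definition kernelS :: "real \<Rightarrow> real \<Rightarrow> real \<Rightarrow> nat \<Rightarrow> complex \<Rightarrow> (nat \<Rightarrow> real) \<Rightarrow> (nat \<Rightarrow> real) \<Rightarrow> complex" where
  "kernelS ap am \<eta> N \<xi> x y =
     (let a = (ap + am) / 2 in
      \<Prod>n<N. hgammaR ap am (complex_of_real (y n - x ((n + 1) mod N)) - \<i> * complex_of_real (a / 2)
                                - complex_of_real (\<eta> / 2) + \<xi>)
            / hgammaL ap am (complex_of_real (y n - x n) + \<i> * complex_of_real (a / 2)
                                + complex_of_real (\<eta> / 2) + \<xi>))"

end

theory Submission
  imports Defs "HOL-Probability.Sinc_Integral" "HOL-Real_Asymp.Real_Asymp"
begin

lemma J_deriv: fixes w y :: real assumes w: "w > 0" and "0 < y"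
  shows "((\<lambda>y. 2*w*Si (2*w*y) - (1 - cos (2*w*y)) / y) has_real_derivative (1 - cos (2*w*y)) / y^2) (at y)"
proof -
  have s: "((\<lambda>y. Si (2*w*y)) has_real_derivative sinc (2*w*y) * (2*w)) (at y)"
    by (rule DERIV_chain2[OF DERIV_Si]) (auto intro!: derivative_eq_intros)
  have c: "((\<lambda>y. (1 - cos (2*w*y)) / y) has_real_derivative ((sin (2*w*y) * (2*w)) * y - (1 - cos (2*w*y))) / y^2) (at y)"
    using assms by (auto intro!: derivative_eq_intros simp: power2_eq_square)
  have "((\<lambda>y. 2*w*Si (2*w*y) - (1 - cos (2*w*y)) / y) has_real_derivative 2*w*(sinc (2*w*y) * (2*w)) - ((sin (2*w*y) * (2*w)) * y - (1 - cos (2*w*y))) / y^2) (at y)"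
    by (rule DERIV_diff[OF DERIV_cmult[OF s] c])
  moreover have "sinc (2*w*y) = sin (2*w*y) / (2*w*y)" using assms by simp
  ultimately show ?thesis using assms
    by (simp add: field_simps power2_eq_square)
qed

lemma L0: fixes w :: real assumes w: "w > 0"
  shows "((\<lambda>y. 2*w*Si (2*w*y) - (1 - cos (2*w*y)) / y) \<longlongrightarrow> 0) (at_right 0)"
proof -
  have 1: "((\<lambda>y. (1 - cos (2*w*y)) / y) \<longlongrightarrow> 0) (at_right 0)"
    using w by real_asymp
  have 2: "((\<lambda>y. 2*w*y) \<longlongrightarrow> 0) (at_right 0)" by real_asymp
  have 3: "(Si \<longlongrightarrow> Si 0) (at 0)" using isCont_Si by (simp add: isCont_def)
  have "((\<lambda>y. Si (2*w*y)) \<longlongrightarrow> Si 0) (at_right 0)"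
    by (rule isCont_tendsto_compose[OF isCont_Si 2])
  moreover have "Si 0 = 0" by (simp add: Si_def zero_ereal_def)
  ultimately have 4: "((\<lambda>y. Si (2*w*y)) \<longlongrightarrow> 0) (at_right 0)" by simp
  have "((\<lambda>y. 2*w*Si (2*w*y) - (1 - cos (2*w*y)) / y) \<longlongrightarrow> 2*w*0 - 0) (at_right 0)"
    by (rule tendsto_diff[OF tendsto_mult[OF tendsto_const 4] 1])
  then show ?thesis by simp
qed
lemma Li: fixes w :: real assumes w: "w > 0"
  shows "((\<lambda>y. 2*w*Si (2*w*y) - (1 - cos (2*w*y)) / y) \<longlongrightarrow> pi * w) at_top"
proof -
  have f: "filterlim (\<lambda>y. 2*w*y) at_top at_top" using w by real_asymp
  have a: "((\<lambda>y. Si (2*w*y)) \<longlongrightarrow> pi/2) at_top"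
    by (rule filterlim_compose[OF Si_at_top f])
  have b: "((\<lambda>y. (1 - cos (2*w*y)) / y) \<longlongrightarrow> 0) at_top"
  proof (rule Lim_null_comparison)
    have "norm ((1 - cos (2*w*x)) / x) \<le> 2 / x" if "x > 0" for x
    proof -
      have "\<bar>1 - cos (2*w*x)\<bar> \<le> 2" using cos_ge_minus_one[of "2*w*x"] cos_le_one[of "2*w*x"] by linarith
      then show ?thesis using that by (simp add: abs_div divide_right_mono)
    qed
    then show "\<forall>\<^sub>F x in at_top. norm ((1 - cos (2*w*x)) / x) \<le> 2 / x"
      using eventually_gt_at_top[of 0] by (rule eventually_mono[rotated]) 
    show "((\<lambda>x::real. 2 / x) \<longlongrightarrow> 0) at_top" by real_asymp
  qed
  have "((\<lambda>y. 2*w*Si (2*w*y) - (1 - cos (2*w*y)) / y) \<longlongrightarrow> 2*w*(pi/2) - 0) at_top"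
    by (rule tendsto_diff[OF tendsto_mult[OF tendsto_const a] b])
  then show ?thesis by (simp add: mult.commute)
qed

lemma J_pos:
  fixes w :: real assumes w: "w > 0"
  shows "set_integrable lborel {0<..} (\<lambda>y. (1 - cos (2*w*y)) / y^2)"
    "(LBINT y:{0<..}. (1 - cos (2*w*y)) / y^2) = pi * w"
proof -
  define F where "F y = 2*w*Si (2*w*y) - (1 - cos (2*w*y)) / y" for y
  have D': "\<And>x. 0 < ereal x \<Longrightarrow> ereal x < \<infinity> \<Longrightarrow> DERIV F x :> (1 - cos (2*w*x)) / x^2"
    using J_deriv[OF w] unfolding F_def[abs_def] by (simp add: zero_ereal_def)
  have C': "\<And>x. 0 < ereal x \<Longrightarrow> ereal x < \<infinity> \<Longrightarrow> isCont (\<lambda>x. (1 - cos (2*w*x)) / x^2) x"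
    by (auto simp: zero_ereal_def intro!: continuous_intros)
  have N': "AE x in lborel. 0 < ereal x \<longrightarrow> ereal x < \<infinity> \<longrightarrow> 0 \<le> (1 - cos (2*w*x)) / x^2"
    by auto
  have lim0: "((F \<circ> real_of_ereal) \<longlongrightarrow> 0) (at_right 0)"
    using L0[OF w] unfolding F_def[abs_def] by (simp add: zero_ereal_def ereal_tendsto_simps)
  have limi: "((F \<circ> real_of_ereal) \<longlongrightarrow> pi * w) (at_left \<infinity>)"
    using Li[OF w] unfolding F_def[abs_def] by (simp add: ereal_tendsto_simps)
  note fin = interval_integral_FTC_nonneg[of 0 "\<infinity>" F "\<lambda>x. (1 - cos (2*w*x)) / x^2", OF _ D' C' N' lim0 limi]
  show "set_integrable lborel {0<..} (\<lambda>y. (1 - cos (2*w*y)) / y^2)"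
    using fin(1) by (simp add: zero_ereal_def)
  show "(LBINT y:{0<..}. (1 - cos (2*w*y)) / y^2) = pi * w"
    using fin(2) by (simp add: interval_lebesgue_integral_0_infty)
qed

lemma J_int:
  fixes u :: real
  shows "set_integrable lborel {0<..} (\<lambda>y. (1 - cos (2*u*y)) / y^2)"
    "(LBINT y:{0<..}. (1 - cos (2*u*y)) / y^2) = pi * \<bar>u\<bar>"
proof -
  have c: "(\<lambda>y. (1 - cos (2*u*y)) / y^2) = (\<lambda>y. (1 - cos (2*\<bar>u\<bar>*y)) / y^2)"
  proof
    fix y show "(1 - cos (2*u*y)) / y^2 = (1 - cos (2*\<bar>u\<bar>*y)) / y^2"
      using cos_minus[of "2*u*y"] by (cases "u \<ge> 0") auto
  qed
  show "set_integrable lborel {0<..} (\<lambda>y. (1 - cos (2*u*y)) / y^2)"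
  proof (cases "u = 0")
    case True then show ?thesis by (simp add: set_integrable_def)
  next
    case False then show ?thesis unfolding c by (intro J_pos) auto
  qed
  show "(LBINT y:{0<..}. (1 - cos (2*u*y)) / y^2) = pi * \<bar>u\<bar>"
  proof (cases "u = 0")
    case True then show ?thesis by simp
  next
    case False then show ?thesis unfolding c by (intro J_pos) auto
  qed
qed

lemma sinh_minus_taylor:
  fixes t :: real
  shows "\<bar>sinh t - t\<bar> \<le> exp \<bar>t\<bar> * \<bar>t\<bar>^3 / 6" and "t \<ge> 0 \<Longrightarrow> sinh t \<ge> t"
proof -
  obtain s1 where s1: "\<bar>s1\<bar> \<le> \<bar>t\<bar>" "exp t = (\<Sum>m<3. t ^ m / fact m) + exp s1 / fact 3 * t ^ 3"
    using Maclaurin_exp_le[of t 3] by blast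
  obtain s2 where s2: "\<bar>s2\<bar> \<le> \<bar>-t\<bar>" "exp (-t) = (\<Sum>m<3. (-t) ^ m / fact m) + exp s2 / fact 3 * (-t) ^ 3"
    using Maclaurin_exp_le[of "-t" 3] by blast
  have f3: "fact 3 = (6::real)" by (simp add: fact_numeral)
  have e: "sinh t - t = (exp s1 + exp s2) * t^3 / 12"
    using s1(2) s2(2) by (simp add: sinh_def numeral_3_eq_3 f3 field_simps power2_eq_square power3_eq_cube)
  have b1: "exp s1 \<le> exp \<bar>t\<bar>" "exp s2 \<le> exp \<bar>t\<bar>" using s1(1) s2(1) by auto
  have "\<bar>sinh t - t\<bar> = (exp s1 + exp s2) * \<bar>t\<bar>^3 / 12"
    unfolding e by (simp add: abs_mult power_abs)
  also have "\<dots> \<le> (2 * exp \<bar>t\<bar>) * \<bar>t\<bar>^3 / 12"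
    using b1 by (intro divide_right_mono mult_right_mono) (auto simp del: exp_le_cancel_iff)
  finally show "\<bar>sinh t - t\<bar> \<le> exp \<bar>t\<bar> * \<bar>t\<bar>^3 / 6" by simp
  show "t \<ge> 0 \<Longrightarrow> sinh t \<ge> t"
  proof -
    assume "t \<ge> 0"
    then have "(exp s1 + exp s2) * t^3 / 12 \<ge> 0" by (intro divide_nonneg_pos mult_nonneg_nonneg) (auto intro: add_nonneg_nonneg)
    then show ?thesis using e by linarith
  qed
qed

lemma cosh_minus_taylor:
  fixes t :: real
  shows "cosh t - 1 \<le> exp \<bar>t\<bar> * t^2 / 2" and "cosh t \<ge> 1"
proof -
  obtain s1 where s1: "\<bar>s1\<bar> \<le> \<bar>t\<bar>" "exp t = (\<Sum>m<2. t ^ m / fact m) + exp s1 / fact 2 * t ^ 2"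
    using Maclaurin_exp_le[of t 2] by blast
  obtain s2 where s2: "\<bar>s2\<bar> \<le> \<bar>-t\<bar>" "exp (-t) = (\<Sum>m<2. (-t) ^ m / fact m) + exp s2 / fact 2 * (-t) ^ 2"
    using Maclaurin_exp_le[of "-t" 2] by blast
  have e: "cosh t - 1 = (exp s1 + exp s2) * t^2 / 4"
    using s1(2) s2(2) by (simp add: cosh_def numeral_2_eq_2 field_simps power2_eq_square)
  have b1: "exp s1 \<le> exp \<bar>t\<bar>" "exp s2 \<le> exp \<bar>t\<bar>" using s1(1) s2(1) by auto
  have "cosh t - 1 \<le> (2 * exp \<bar>t\<bar>) * t^2 / 4"
    unfolding e using b1 by (intro divide_right_mono mult_right_mono) (auto simp del: exp_le_cancel_iff)
  then show "cosh t - 1 \<le> exp \<bar>t\<bar> * t^2 / 2" by simp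
  show "cosh t \<ge> 1" using e by (smt (verit) divide_nonneg_pos exp_gt_zero mult_nonneg_nonneg zero_le_power2)
qed

lemma sin_minus_taylor:
  fixes s :: real
  shows "\<bar>sin s - s\<bar> \<le> \<bar>s\<bar>^3 / 6"
  using Maclaurin_sin_bound[of s 3]
  by (simp add: numeral_3_eq_3 sin_coeff_def fact_numeral)


lemma frac_bound:
  fixes X D y al be :: real
  assumes "0 < be" "0 < y" "\<bar>X\<bar> \<le> al * y^k" "D \<ge> be * y^k"
  shows "\<bar>X / D\<bar> \<le> al / be"
proof -
  have yk: "y^k > 0" using assms by simp
  have Dp: "D > 0" using assms yk by (smt (verit) mult_pos_pos)
  have "\<bar>X / D\<bar> = \<bar>X\<bar> / D" using Dp by (simp add: abs_div)
  also have "\<dots> \<le> (al * y^k) / (be * y^k)"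
    using assms Dp yk by (intro frac_le) (auto intro: order_trans[OF abs_ge_zero])
  also have "\<dots> = al / be" using yk assms(1,2) by simp
  finally show ?thesis .
qed

lemma abs_sinh_le_exp: "\<bar>sinh (t::real)\<bar> \<le> exp \<bar>t\<bar>"
proof -
  have "\<bar>sinh t\<bar> = \<bar>exp t - exp (-t)\<bar> / 2" by (simp add: sinh_def abs_div)
  also have "\<dots> \<le> (exp t + exp (-t)) / 2"
    using exp_gt_zero[of t] exp_gt_zero[of "-t"] by (intro divide_right_mono) (auto simp: abs_le_iff)
  also have "\<dots> \<le> exp \<bar>t\<bar>" by (cases "t \<ge> 0") auto
  finally show ?thesis .
qed

lemma cosh_le_exp: "cosh (t::real) \<le> exp \<bar>t\<bar>"
proof -
  have "cosh t = (exp t + exp (-t)) / 2" by (simp add: cosh_def)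
  also have "\<dots> \<le> exp \<bar>t\<bar>" by (cases "t \<ge> 0") auto
  finally show ?thesis .
qed

definition shsh :: "real \<Rightarrow> real \<Rightarrow> real \<Rightarrow> real" where
  "shsh ap am y = sinh (ap * y) * sinh (am * y)"

definition Afun :: "real \<Rightarrow> real \<Rightarrow> real \<Rightarrow> real" where
  "Afun ap am y = 1 / (2 * shsh ap am y) - 1 / (2 * (ap * am) * y^2)"

definition gfun :: "real \<Rightarrow> real \<Rightarrow> real \<Rightarrow> real \<Rightarrow> real" where
  "gfun ap am w y = sinh (2*y*w) / (2 * shsh ap am y * y) - w / (ap * am * y^2)"

definition ReFfun :: "real \<Rightarrow> real \<Rightarrow> real \<Rightarrow> real \<Rightarrow> real \<Rightarrow> real" where
  "ReFfun ap am u w y = sin (2*y*u) * cosh (2*y*w) / (2 * shsh ap am y * y) - u / (ap * am * y^2)"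

definition ImFfun :: "real \<Rightarrow> real \<Rightarrow> real \<Rightarrow> real \<Rightarrow> real \<Rightarrow> real" where
  "ImFfun ap am u w y = cos (2*y*u) * sinh (2*y*w) / (2 * shsh ap am y * y) - w / (ap * am * y^2)"

context
  fixes ap am :: real
  assumes ap: "ap > 0" and am: "am > 0"
begin

lemma shsh_lower: "y > 0 \<Longrightarrow> shsh ap am y \<ge> (ap * am) * y^2"
proof -
  assume y: "y > 0"
  have "sinh (ap*y) \<ge> ap*y" "sinh (am*y) \<ge> am*y"
    using sinh_minus_taylor(2) ap am y by auto
  moreover have "ap*y \<ge> 0" "am*y \<ge> 0" using ap am y by auto
  ultimately have "sinh (ap*y) * sinh (am*y) \<ge> (ap*y) * (am*y)"
    by (intro mult_mono) auto
  then show ?thesis by (simp add: shsh_def power2_eq_square mult_ac)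
qed

lemma shsh_pos: "y > 0 \<Longrightarrow> shsh ap am y > 0"
  using shsh_lower[of y] ap am by (smt (verit) mult_pos_pos zero_less_power)

lemma Afun_bound: "\<exists>CA. \<forall>y. 0 < y \<and> y \<le> 1 \<longrightarrow> \<bar>Afun ap am y\<bar> \<le> CA"
proof -
  define R where "R = exp ap * ap^3 / 6"
  define S where "S = exp am * am^3 / 6"
  define K where "K = ap * S + am * R + R * S"
  have Rp: "R \<ge> 0" "S \<ge> 0" using ap am by (auto simp: R_def S_def)
  have "\<bar>Afun ap am y\<bar> \<le> K / (2 * (ap*am)^2)" if y: "0 < y" "y \<le> 1" for y
  proof -
    define q1 where "q1 = sinh (ap*y)"
    define q2 where "q2 = sinh (am*y)"
    define r1 where "r1 = q1 - ap*y"
    define r2 where "r2 = q2 - am*y"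
    have r1: "0 \<le> r1" "r1 \<le> R * y^3"
    proof -
      show "0 \<le> r1" using sinh_minus_taylor(2)[of "ap*y"] ap y by (simp add: r1_def q1_def)
      have "r1 \<le> exp \<bar>ap*y\<bar> * \<bar>ap*y\<bar>^3 / 6" using abs_le_D1[OF sinh_minus_taylor(1)[of "ap*y"]]
        by (simp add: r1_def q1_def)
      also have "\<dots> \<le> exp ap * (ap^3 * y^3) / 6"
        using ap y by (intro divide_right_mono mult_mono) (auto simp: abs_mult power_mult_distrib)
      finally show "r1 \<le> R * y^3" by (simp add: R_def)
    qed
    have r2: "0 \<le> r2" "r2 \<le> S * y^3"
    proof -
      show "0 \<le> r2" using sinh_minus_taylor(2)[of "am*y"] am y by (simp add: r2_def q2_def)
      have "r2 \<le> exp \<bar>am*y\<bar> * \<bar>am*y\<bar>^3 / 6" using abs_le_D1[OF sinh_minus_taylor(1)[of "am*y"]]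
        by (simp add: r2_def q2_def)
      also have "\<dots> \<le> exp am * (am^3 * y^3) / 6"
        using am y by (intro divide_right_mono mult_mono) (auto simp: abs_mult power_mult_distrib)
      finally show "r2 \<le> S * y^3" by (simp add: S_def)
    qed
    have D: "q1 * q2 - (ap*am) * y^2 = ap*y*r2 + am*y*r1 + r1*r2"
      by (simp add: r1_def r2_def algebra_simps power2_eq_square)
    have y6: "y^6 \<le> y^4" using y by (intro power_decreasing) auto
    have y4: "y^4 = y * y^3" by (simp add: eval_nat_numeral)
    have t1: "ap*y*r2 \<le> ap * S * y^4"
    proof -
      have "ap*y*r2 \<le> ap*y*(S*y^3)" using r2 ap y by (intro mult_left_mono) auto
      then show ?thesis unfolding y4 by (simp add: mult_ac)
    qed
    have t2: "am*y*r1 \<le> am * R * y^4"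
    proof -
      have "am*y*r1 \<le> am*y*(R*y^3)" using r1 am y by (intro mult_left_mono) auto
      then show ?thesis unfolding y4 by (simp add: mult_ac)
    qed
    have t3: "r1*r2 \<le> R * S * y^4"
    proof -
      have "r1*r2 \<le> (R*y^3)*(S*y^3)" using r1 r2 by (intro mult_mono) auto
      also have "\<dots> = R*S*y^6" by (simp add: eval_nat_numeral mult_ac)
      also have "\<dots> \<le> R*S*y^4" using y6 Rp by (intro mult_left_mono) auto
      finally show ?thesis .
    qed
    have num: "0 \<le> q1 * q2 - (ap*am) * y^2" "q1 * q2 - (ap*am) * y^2 \<le> K * y^4"
    proof -
      have "0 \<le> ap*y*r2" "0 \<le> am*y*r1" "0 \<le> r1*r2" using r1 r2 ap am y by auto
      then show "0 \<le> q1 * q2 - (ap*am) * y^2" unfolding D by linarith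
      have "K * y^4 = ap * S * y^4 + am * R * y^4 + R * S * y^4" unfolding K_def by (simp add: algebra_simps)
      then show "q1 * q2 - (ap*am) * y^2 \<le> K * y^4" unfolding D using t1 t2 t3 by linarith
    qed
    have ss: "q1 * q2 \<ge> (ap*am) * y^2" "q1 * q2 > 0"
      using shsh_lower[OF y(1)] shsh_pos[OF y(1)] by (auto simp: shsh_def q1_def q2_def)
    have gen: "1 / (2*Q) - 1 / (2*P) = - ((Q - P) / (2 * Q * P))" if "Q \<noteq> 0" "P \<noteq> 0" for P Q :: real
      using that by (simp add: field_simps)
    have "Afun ap am y = - ((q1*q2 - (ap*am)*y^2) / (2 * (q1*q2) * ((ap*am) * y^2)))"
      unfolding Afun_def shsh_def q1_def[symmetric] q2_def[symmetric]
      using gen[of "q1*q2" "(ap*am)*y^2"] ss ap am y by (simp add: mult.assoc mult_eq_0_iff) (metis mult_zero_left mult_zero_right less_irrefl)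
    then have "\<bar>Afun ap am y\<bar> = \<bar>(q1*q2 - (ap*am)*y^2) / ((2 * (q1*q2) * (ap*am)) * y^2)\<bar>" 
      by (simp add: mult_ac)
    also have "\<dots> \<le> K / (2 * (ap*am)^2)"
    proof -
      have "\<bar>(q1*q2 - (ap*am)*y^2) / ((2 * (q1*q2) * (ap*am)) * y^2)\<bar> = \<bar>((q1*q2 - (ap*am)*y^2) / y^2) / (2 * (q1*q2) * (ap*am))\<bar>"
        by (simp add: field_simps)
      also have "\<dots> \<le> K / (2 * (ap*am)^2)"
      proof (rule frac_bound[where k=2])
        show "0 < 2 * (ap*am)^2" using ap am by simp
        show "0 < y" by fact
        have "\<bar>(q1*q2 - (ap*am)*y^2) / y^2\<bar> = (q1*q2 - (ap*am)*y^2) / y^2"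
          using num y by simp
        also have "\<dots> \<le> K * y^4 / y^2" using num y by (intro divide_right_mono) auto
        also have "\<dots> = K * y^2" using y by (simp add: eval_nat_numeral)
        finally show "\<bar>(q1*q2 - (ap*am)*y^2) / y^2\<bar> \<le> K * y^2" .
        have "2 * (q1 * q2) * (ap*am) \<ge> 2 * ((ap*am)*y^2) * (ap*am)"
          using ss ap am by (intro mult_right_mono) auto
        then show "2 * (q1 * q2) * (ap*am) \<ge> 2 * (ap*am)^2 * y^2" by (simp add: power2_eq_square mult_ac)
      qed
      finally show ?thesis .
    qed
    finally show ?thesis .
  qed
  then show ?thesis by blast
qed

end

lemma borel_measurable_sinh_real[measurable]: "(sinh :: real \<Rightarrow> real) \<in> borel_measurable borel"
  unfolding sinh_def[abs_def] by measurable
lemma borel_measurable_cosh_real[measurable]: "(cosh :: real \<Rightarrow> real) \<in> borel_measurable borel"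
  unfolding cosh_def[abs_def] by measurable

lemma inv_sq_integrable: "set_integrable lborel {1<..} (\<lambda>y::real. 1 / y^2)"
proof -
  define F where "F y = - 1 / y" for y :: real
  have D': "\<And>x. ereal 1 < ereal x \<Longrightarrow> ereal x < \<infinity> \<Longrightarrow> DERIV F x :> 1 / x^2"
    unfolding F_def by (auto intro!: derivative_eq_intros simp: power2_eq_square)
  have C': "\<And>x. ereal 1 < ereal x \<Longrightarrow> ereal x < \<infinity> \<Longrightarrow> isCont (\<lambda>x. 1 / x^2) x"
    by (auto intro!: continuous_intros)
  have N': "AE x in lborel. ereal 1 < ereal x \<longrightarrow> ereal x < \<infinity> \<longrightarrow> 0 \<le> 1 / x^2"
    by auto
  have l1: "((F \<circ> real_of_ereal) \<longlongrightarrow> -1) (at_right (ereal 1))"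
  proof -
    have "(F \<longlongrightarrow> -1 / 1) (at_right 1)" unfolding F_def
      by (intro tendsto_intros) auto
    then show ?thesis by (simp add: ereal_tendsto_simps)
  qed
  have l2: "((F \<circ> real_of_ereal) \<longlongrightarrow> 0) (at_left \<infinity>)"
  proof -
    have "(F \<longlongrightarrow> 0) at_top" unfolding F_def by real_asymp
    then show ?thesis by (simp add: ereal_tendsto_simps)
  qed
  note fin = interval_integral_FTC_nonneg[of "ereal 1" "\<infinity>" F "\<lambda>x. 1 / x^2", OF _ D' C' N' l1 l2]
  then show ?thesis by simp
qed

lemma integrable_crit:
  fixes h :: "real \<Rightarrow> real"
  assumes meas: "h \<in> borel_measurable borel"
    and near0: "\<And>y. 0 < y \<Longrightarrow> y \<le> 1 \<Longrightarrow> \<bar>h y\<bar> \<le> B"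
    and far: "\<And>y. 1 \<le> y \<Longrightarrow> \<bar>h y\<bar> \<le> Ca * exp (-(y*d)) + Cb * (1 / y^2)"
    and d: "d > 0"
  shows "set_integrable lborel {0<..} h"
proof -
  have i1: "set_integrable lborel {0<..1} h"
    unfolding set_integrable_def
    by (rule integrableI_bounded_set_indicator[where B=B]) (use near0 meas in auto)
  have e: "set_integrable lborel {1<..} (\<lambda>y. exp (-(y*d)))"
    by (rule set_integrable_subset[OF integrable_I0i_exp_mscale[OF d]]) auto
  have g: "set_integrable lborel {1<..} (\<lambda>y. Ca * exp (-(y*d)) + Cb * (1 / y^2))"
  proof -
    have g1: "set_integrable lborel {1<..} (\<lambda>y. Ca * exp (-(y*d)))" using e by (intro set_integrable_mult_right)
    have g2: "set_integrable lborel {1<..} (\<lambda>y. Cb * (1 / y^2))" using inv_sq_integrable by (intro set_integrable_mult_right)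
    show ?thesis by (rule set_integral_add(1)[OF g1 g2])
  qed
  have i2: "set_integrable lborel {1<..} h"
  proof (rule set_integrable_bound[OF g])
    show "set_borel_measurable lborel {1<..} h"
      unfolding set_borel_measurable_def using meas by measurable
    show "AE x in lborel. x \<in> {1<..} \<longrightarrow> norm (h x) \<le> norm (Ca * exp (-(x*d)) + Cb * (1 / x^2))"
    proof (rule AE_I2, rule impI)
      fix x :: real assume "x \<in> {1<..}"
      then have "\<bar>h x\<bar> \<le> Ca * exp (-(x*d)) + Cb * (1 / x^2)" using far by auto
      then show "norm (h x) \<le> norm (Ca * exp (-(x*d)) + Cb * (1 / x^2))" by simp
    qed
  qed
  have "set_integrable lborel ({0<..1} \<union> {1<..}) h"
    by (rule set_integrable_Un[OF i1 i2]) auto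
  moreover have "{0<..1} \<union> {1<..} = {0::real<..}" by auto
  ultimately show ?thesis by simp
qed

lemma sinh_lower_exp:
  fixes c t :: real assumes "0 \<le> c" "c \<le> t"
  shows "sinh t \<ge> exp t * (1 - exp (-2*c)) / 2"
proof -
  have "exp (-t) = exp t * exp (-2*t)" by (simp flip: exp_add)
  moreover have "exp (-2*t) \<le> exp (-2*c)" using assms by simp
  ultimately have "exp t - exp (-t) \<ge> exp t * (1 - exp (-2*c))"
    by (simp add: algebra_simps)
  then show ?thesis by (simp add: sinh_def)
qed

context
  fixes ap am :: real
  assumes ap: "ap > 0" and am: "am > 0"
begin

lemma shsh_far: "\<exists>\<kappa>>0. \<forall>y\<ge>1. shsh ap am y \<ge> \<kappa> * exp ((ap+am)*y)"
proof -
  define e1 where "e1 = (1 - exp (-2*ap)) / 2"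
  define e2 where "e2 = (1 - exp (-2*am)) / 2"
  have e: "e1 > 0" "e2 > 0" using ap am by (auto simp: e1_def e2_def)
  have "shsh ap am y \<ge> (e1*e2) * exp ((ap+am)*y)" if y: "y \<ge> 1" for y
  proof -
    have a: "sinh (ap*y) \<ge> exp (ap*y) * e1" using sinh_lower_exp[of ap "ap*y"] ap y
      by (simp add: e1_def)
    have b: "sinh (am*y) \<ge> exp (am*y) * e2" using sinh_lower_exp[of am "am*y"] am y
      by (simp add: e2_def)
    have "sinh (ap*y) * sinh (am*y) \<ge> (exp (ap*y) * e1) * (exp (am*y) * e2)"
      using a b e ap am y by (intro mult_mono) auto
    moreover have "(exp (ap*y) * e1) * (exp (am*y) * e2) = (e1*e2) * exp ((ap+am)*y)"
      by (simp add: algebra_simps exp_add)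
    ultimately show ?thesis by (simp add: shsh_def)
  qed
  then show ?thesis using e by (intro exI[of _ "e1*e2"]) auto
qed

lemma far_term:
  assumes kap: "\<kappa> > 0" "\<forall>y\<ge>1. shsh ap am y \<ge> \<kappa> * exp ((ap+am)*y)"
    and y: "y \<ge> 1" and X: "\<bar>X\<bar> \<le> exp (\<bar>2*y*w\<bar>)"
  shows "\<bar>X / (2 * shsh ap am y * y)\<bar> \<le> (1/(2*\<kappa>)) * exp (-(y*((ap+am) - 2*\<bar>w\<bar>)))"
proof -
  have S: "shsh ap am y \<ge> \<kappa> * exp ((ap+am)*y)" using kap y by auto
  have Sp: "\<kappa> * exp ((ap+am)*y) > 0" using kap by simp
  have D: "2 * shsh ap am y * y \<ge> 2 * (\<kappa> * exp ((ap+am)*y))"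
  proof -
    have "2 * shsh ap am y * y \<ge> 2 * shsh ap am y * 1" using y S Sp by (intro mult_left_mono) auto
    then show ?thesis using S by linarith
  qed
  have "\<bar>X / (2 * shsh ap am y * y)\<bar> = \<bar>X\<bar> / (2 * shsh ap am y * y)"
  proof -
    have Dp: "2 * shsh ap am y * y > 0" using D Sp by linarith
    then show ?thesis by (simp add: abs_div)
  qed
  also have "\<dots> \<le> exp (\<bar>2*y*w\<bar>) / (2 * (\<kappa> * exp ((ap+am)*y)))"
    using D Sp X by (intro frac_le) auto
  also have "\<dots> = (1/(2*\<kappa>)) * (exp (\<bar>2*y*w\<bar>) / exp ((ap+am)*y))"
    by simp
  also have "exp (\<bar>2*y*w\<bar>) / exp ((ap+am)*y) = exp (-(y*((ap+am) - 2*\<bar>w\<bar>)))"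
    using y by (simp add: exp_diff[symmetric] abs_mult algebra_simps)
  finally show ?thesis .
qed

end

lemma split_g:
  fixes S Q P y w :: real assumes "Q \<noteq> 0" "P \<noteq> 0" "y \<noteq> 0"
  shows "S / (2*Q*y) - w / (P*y^2) = (S * (1/(2*Q) - 1/(2*P*y^2))) / y + (S - 2*y*w) / (2*P*y^3)"
  using assms by (simp add: field_simps power3_eq_cube power2_eq_square)

lemma split_ReF:
  fixes S C Q P y u :: real assumes "Q \<noteq> 0" "P \<noteq> 0" "y \<noteq> 0"
  shows "S * C / (2*Q*y) - u / (P*y^2) = S * (C - 1) / (2*Q*y) + (S * (1/(2*Q) - 1/(2*P*y^2))) / y + (S - 2*y*u) / (2*P*y^3)"
  using assms by (simp add: field_simps power3_eq_cube power2_eq_square)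

lemma sinh_near0:
  fixes y w :: real assumes y: "0 < y" "y \<le> 1"
  shows "\<bar>sinh (2*y*w)\<bar> \<le> (2*\<bar>w\<bar> + exp (2*\<bar>w\<bar>) * (2*\<bar>w\<bar>)^3 / 6) * y"
proof -
  have t: "\<bar>2*y*w\<bar> = 2*\<bar>w\<bar>*y" using y by (simp add: abs_mult)
  have "\<bar>sinh (2*y*w)\<bar> \<le> \<bar>2*y*w\<bar> + exp \<bar>2*y*w\<bar> * \<bar>2*y*w\<bar>^3 / 6"
    using sinh_minus_taylor(1)[of "2*y*w"] by linarith
  also have "exp \<bar>2*y*w\<bar> * \<bar>2*y*w\<bar>^3 / 6 \<le> exp (2*\<bar>w\<bar>) * ((2*\<bar>w\<bar>)^3 * y) / 6"
  proof -
    have "\<bar>2*y*w\<bar>^3 = (2*\<bar>w\<bar>)^3 * y^3" unfolding t by (simp add: power_mult_distrib)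
    also have "\<dots> \<le> (2*\<bar>w\<bar>)^3 * y" using y by (intro mult_left_mono) (auto simp: power_le_one_iff intro!: power_decreasing[of 1 3 y, simplified])
    finally have a: "\<bar>2*y*w\<bar>^3 \<le> (2*\<bar>w\<bar>)^3 * y" .
    have b: "exp \<bar>2*y*w\<bar> \<le> exp (2*\<bar>w\<bar>)" unfolding t using y by (simp add: mult_left_le)
    show ?thesis using a b by (intro divide_right_mono mult_mono) auto
  qed
  finally show ?thesis unfolding t by (simp add: algebra_simps)
qed

context
  fixes ap am :: real
  assumes ap: "ap > 0" and am: "am > 0"
begin

lemma gfun_integrable:
  assumes w: "\<bar>w\<bar> < (ap+am)/2"
  shows "set_integrable lborel {0<..} (gfun ap am w)"
proof -
  obtain CA where CA: "\<And>y. 0 < y \<Longrightarrow> y \<le> 1 \<Longrightarrow> \<bar>Afun ap am y\<bar> \<le> CA"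
    using Afun_bound[OF ap am] by blast
  obtain \<kappa> where kap: "\<kappa> > 0" "\<forall>y\<ge>1. shsh ap am y \<ge> \<kappa> * exp ((ap+am)*y)"
    using shsh_far[OF ap am] by blast
  define Qw where "Qw = 2*\<bar>w\<bar> + exp (2*\<bar>w\<bar>) * (2*\<bar>w\<bar>)^3 / 6"
  have p: "ap*am > 0" using ap am by simp
  show ?thesis
  proof (rule integrable_crit[where B = "Qw*CA/1 + (exp (2*\<bar>w\<bar>) * (2*\<bar>w\<bar>)^3 / 6) / (2*(ap*am))"
        and Ca = "1/(2*\<kappa>)" and Cb = "\<bar>w\<bar>/(ap*am)" and d = "(ap+am) - 2*\<bar>w\<bar>"])
    show "gfun ap am w \<in> borel_measurable borel" unfolding gfun_def[abs_def] shsh_def by measurable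
    show "(ap+am) - 2*\<bar>w\<bar> > 0" using w by simp
  next
    fix y :: real assume y: "0 < y" "y \<le> 1"
    have Sp: "shsh ap am y > 0" using shsh_pos[OF ap am y(1)] .
    have e: "gfun ap am w y = (sinh (2*y*w) * Afun ap am y) / y + (sinh (2*y*w) - 2*y*w) / (2*(ap*am)*y^3)"
      unfolding gfun_def Afun_def using Sp p y by (intro split_g) auto
    have t1: "\<bar>(sinh (2*y*w) * Afun ap am y) / y\<bar> \<le> Qw*CA/1"
    proof (rule frac_bound[where k=1])
      have "\<bar>sinh (2*y*w) * Afun ap am y\<bar> \<le> (Qw*y) * CA"
        unfolding abs_mult using sinh_near0[OF y, of w] CA[OF y] by (intro mult_mono) (auto simp: Qw_def)
      then show "\<bar>sinh (2*y*w) * Afun ap am y\<bar> \<le> Qw*CA * y^1" by (simp add: mult_ac)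
    qed (use y in auto)
    have t2: "\<bar>(sinh (2*y*w) - 2*y*w) / (2*(ap*am)*y^3)\<bar> \<le> (exp (2*\<bar>w\<bar>) * (2*\<bar>w\<bar>)^3 / 6) / (2*(ap*am))"
    proof (rule frac_bound[where k=3])
      have t: "\<bar>2*y*w\<bar> = 2*\<bar>w\<bar>*y" using y by (simp add: abs_mult)
      have "\<bar>sinh (2*y*w) - 2*y*w\<bar> \<le> exp \<bar>2*y*w\<bar> * \<bar>2*y*w\<bar>^3 / 6" by (rule sinh_minus_taylor(1))
      also have "\<dots> \<le> exp (2*\<bar>w\<bar>) * ((2*\<bar>w\<bar>)^3 * y^3) / 6"
        unfolding t using y by (intro divide_right_mono mult_mono) (auto simp: power_mult_distrib mult_left_le)
      finally show "\<bar>sinh (2*y*w) - 2*y*w\<bar> \<le> exp (2*\<bar>w\<bar>) * (2*\<bar>w\<bar>)^3 / 6 * y^3" by (simp add: mult_ac)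
    qed (use y p in auto)
    show "\<bar>gfun ap am w y\<bar> \<le> Qw*CA/1 + (exp (2*\<bar>w\<bar>) * (2*\<bar>w\<bar>)^3 / 6) / (2*(ap*am))"
      unfolding e using t1 t2 by linarith
  next
    fix y :: real assume y: "1 \<le> y"
    have a: "\<bar>sinh (2*y*w) / (2 * shsh ap am y * y)\<bar> \<le> (1/(2*\<kappa>)) * exp (-(y*((ap+am) - 2*\<bar>w\<bar>)))"
      by (rule far_term[OF ap am kap y]) (rule abs_sinh_le_exp)
    have b: "\<bar>w / (ap*am*y^2)\<bar> = \<bar>w\<bar>/(ap*am) * (1/y^2)" using ap am y by (simp add: abs_div abs_mult)
    show "\<bar>gfun ap am w y\<bar> \<le> 1/(2*\<kappa>) * exp (-(y*((ap+am) - 2*\<bar>w\<bar>))) + \<bar>w\<bar>/(ap*am) * (1/y^2)"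
      unfolding gfun_def using a b by linarith
  qed
qed

lemma ReFfun_integrable:
  assumes w: "\<bar>w\<bar> < (ap+am)/2"
  shows "set_integrable lborel {0<..} (ReFfun ap am u w)"
proof -
  obtain CA where CA: "\<And>y. 0 < y \<Longrightarrow> y \<le> 1 \<Longrightarrow> \<bar>Afun ap am y\<bar> \<le> CA"
    using Afun_bound[OF ap am] by blast
  obtain \<kappa> where kap: "\<kappa> > 0" "\<forall>y\<ge>1. shsh ap am y \<ge> \<kappa> * exp ((ap+am)*y)"
    using shsh_far[OF ap am] by blast
  have p: "ap*am > 0" using ap am by simp
  define B1 where "B1 = (2*\<bar>u\<bar> * (exp (2*\<bar>w\<bar>) * (2*\<bar>w\<bar>)^2 / 2)) / (2*(ap*am))"
  define B2 where "B2 = (2*\<bar>u\<bar>*CA) / 1"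
  define B3 where "B3 = ((2*\<bar>u\<bar>)^3 / 6) / (2*(ap*am))"
  show ?thesis
  proof (rule integrable_crit[where B = "B1 + B2 + B3"
        and Ca = "1/(2*\<kappa>)" and Cb = "\<bar>u\<bar>/(ap*am)" and d = "(ap+am) - 2*\<bar>w\<bar>"])
    show "ReFfun ap am u w \<in> borel_measurable borel" unfolding ReFfun_def[abs_def] shsh_def by measurable
    show "(ap+am) - 2*\<bar>w\<bar> > 0" using w by simp
  next
    fix y :: real assume y: "0 < y" "y \<le> 1"
    have Sp: "shsh ap am y > 0" using shsh_pos[OF ap am y(1)] .
    have SL: "shsh ap am y \<ge> (ap*am)*y^2" using shsh_lower[OF ap am y(1)] .
    have tw: "\<bar>2*y*w\<bar> = 2*\<bar>w\<bar>*y" and tu: "\<bar>2*y*u\<bar> = 2*\<bar>u\<bar>*y" using y by (simp_all add: abs_mult)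
    have sinb: "\<bar>sin (2*y*u)\<bar> \<le> 2*\<bar>u\<bar>*y" using abs_sin_x_le_abs_x[of "2*y*u"] tu by simp
    have e: "ReFfun ap am u w y = sin (2*y*u) * (cosh (2*y*w) - 1) / (2* shsh ap am y*y)
        + (sin (2*y*u) * Afun ap am y) / y + (sin (2*y*u) - 2*y*u) / (2*(ap*am)*y^3)"
      unfolding ReFfun_def Afun_def using Sp p y by (intro split_ReF) auto
    have t1: "\<bar>sin (2*y*u) * (cosh (2*y*w) - 1) / (2* shsh ap am y*y)\<bar> \<le> B1"
      unfolding B1_def
    proof (rule frac_bound[where k=3])
      have c: "\<bar>cosh (2*y*w) - 1\<bar> \<le> (exp (2*\<bar>w\<bar>) * (2*\<bar>w\<bar>)^2 / 2) * y^2"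
      proof -
        have "cosh (2*y*w) - 1 \<le> exp \<bar>2*y*w\<bar> * (2*y*w)^2 / 2" by (rule cosh_minus_taylor(1))
        also have "\<dots> \<le> exp (2*\<bar>w\<bar>) * ((2*\<bar>w\<bar>)^2 * y^2) / 2"
        proof -
          have "(2*y*w)^2 = (2*\<bar>w\<bar>)^2 * y^2" by (simp add: power_mult_distrib)
          moreover have "exp \<bar>2*y*w\<bar> \<le> exp (2*\<bar>w\<bar>)" unfolding tw using y by (simp add: mult_left_le)
          ultimately show ?thesis by (intro divide_right_mono mult_mono) auto
        qed
        finally show ?thesis using cosh_minus_taylor(2)[of "2*y*w"] by (simp add: mult_ac)
      qed
      have "\<bar>sin (2*y*u) * (cosh (2*y*w) - 1)\<bar> \<le> (2*\<bar>u\<bar>*y) * ((exp (2*\<bar>w\<bar>) * (2*\<bar>w\<bar>)^2 / 2) * y^2)"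
        unfolding abs_mult using sinb c y by (intro mult_mono) auto
      then show "\<bar>sin (2*y*u) * (cosh (2*y*w) - 1)\<bar> \<le> 2*\<bar>u\<bar> * (exp (2*\<bar>w\<bar>) * (2*\<bar>w\<bar>)^2 / 2) * y^3"
        by (simp add: power3_eq_cube power2_eq_square mult_ac)
      have "2* shsh ap am y*y \<ge> 2*((ap*am)*y^2)*y" using SL y by (intro mult_right_mono) auto
      then show "2* shsh ap am y*y \<ge> 2*(ap*am) * y^3" by (simp add: power3_eq_cube power2_eq_square mult_ac)
    qed (use y p in auto)
    have t2: "\<bar>(sin (2*y*u) * Afun ap am y) / y\<bar> \<le> B2"
      unfolding B2_def
    proof (rule frac_bound[where k=1])
      have "\<bar>sin (2*y*u) * Afun ap am y\<bar> \<le> (2*\<bar>u\<bar>*y) * CA"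
        unfolding abs_mult using sinb CA[OF y] y by (intro mult_mono) auto
      then show "\<bar>sin (2*y*u) * Afun ap am y\<bar> \<le> 2*\<bar>u\<bar>*CA * y^1" by (simp add: mult_ac)
    qed (use y in auto)
    have t3: "\<bar>(sin (2*y*u) - 2*y*u) / (2*(ap*am)*y^3)\<bar> \<le> B3"
      unfolding B3_def
    proof (rule frac_bound[where k=3])
      have "\<bar>sin (2*y*u) - 2*y*u\<bar> \<le> \<bar>2*y*u\<bar>^3 / 6" by (rule sin_minus_taylor)
      then show "\<bar>sin (2*y*u) - 2*y*u\<bar> \<le> (2*\<bar>u\<bar>)^3 / 6 * y^3" unfolding tu by (simp add: power_mult_distrib mult_ac)
    qed (use y p in auto)
    show "\<bar>ReFfun ap am u w y\<bar> \<le> B1 + B2 + B3"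
      unfolding e using t1 t2 t3 by linarith
  next
    fix y :: real assume y: "1 \<le> y"
    have a: "\<bar>sin (2*y*u) * cosh (2*y*w) / (2 * shsh ap am y * y)\<bar> \<le> (1/(2*\<kappa>)) * exp (-(y*((ap+am) - 2*\<bar>w\<bar>)))"
    proof (rule far_term[OF ap am kap y])
      have "\<bar>sin (2*y*u) * cosh (2*y*w)\<bar> \<le> 1 * cosh (2*y*w)"
        unfolding abs_mult using cosh_minus_taylor(2)[of "2*y*w"] by (intro mult_mono) auto
      then show "\<bar>sin (2*y*u) * cosh (2*y*w)\<bar> \<le> exp \<bar>2*y*w\<bar>" using cosh_le_exp[of "2*y*w"] by linarith
    qed
    have b: "\<bar>u / (ap*am*y^2)\<bar> = \<bar>u\<bar>/(ap*am) * (1/y^2)" using ap am y by (simp add: abs_div abs_mult)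
    show "\<bar>ReFfun ap am u w y\<bar> \<le> 1/(2*\<kappa>) * exp (-(y*((ap+am) - 2*\<bar>w\<bar>))) + \<bar>u\<bar>/(ap*am) * (1/y^2)"
      unfolding ReFfun_def using a b by linarith
  qed
qed

end

definition Fc :: "real \<Rightarrow> real \<Rightarrow> complex \<Rightarrow> real \<Rightarrow> complex" where
  "Fc ap am z y = (sin (2 * complex_of_real y * z) / complex_of_real (2 * sinh (ap * y) * sinh (am * y))
       - z / complex_of_real (ap * am * y)) / complex_of_real y"

lemma hgamma_Fc: "hgamma ap am z = exp (\<i> * (LINT y:{0<..}|lborel. Fc ap am z y))"
  unfolding hgamma_def Fc_def ..

lemma set_integral_Im:
  fixes f :: "'a \<Rightarrow> complex"
  assumes "set_integrable M A f"
  shows "Im (LINT x:A|M. f x) = (LINT x:A|M. Im (f x))"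
proof -
  have "Im (LINT x:A|M. f x) = integral\<^sup>L M (\<lambda>x. Im (indicator A x *\<^sub>R f x))"
    unfolding set_lebesgue_integral_def using assms unfolding set_integrable_def by (rule integral_Im[symmetric])
  also have "\<dots> = (LINT x:A|M. Im (f x))"
    unfolding set_lebesgue_integral_def by simp
  finally show ?thesis .
qed

lemma cmult_bounds:
  fixes c x :: real assumes "\<bar>c\<bar> \<le> 1" shows "c*x \<le> \<bar>x\<bar>" "- \<bar>x\<bar> \<le> c*x"
proof -
  have "\<bar>c*x\<bar> \<le> \<bar>x\<bar>" using assms by (simp add: abs_mult mult_left_le_one_le)
  then show "c*x \<le> \<bar>x\<bar>" "- \<bar>x\<bar> \<le> c*x" by linarith+
qed

context
  fixes ap am :: real
  assumes ap: "ap > 0" and am: "am > 0"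
begin

lemma Fc_Re: "y > 0 \<Longrightarrow> Re (Fc ap am (Complex u w) y) = ReFfun ap am u w y"
proof -
  assume y: "y > 0"
  have Sp: "shsh ap am y > 0" using shsh_pos[OF ap am y] .
  have "Re (sin (2 * complex_of_real y * Complex u w)) = sin (2*y*u) * cosh (2*y*w)"
    by (simp add: Re_sin cosh_def)
  then have "Re (Fc ap am (Complex u w) y) = (sin (2*y*u) * cosh (2*y*w) / (2 * shsh ap am y) - u / (ap*am*y)) / y"
    unfolding Fc_def shsh_def by (simp add: mult.assoc)
  also have "\<dots> = ReFfun ap am u w y"
    unfolding ReFfun_def using Sp y ap am by (simp add: field_simps power2_eq_square)
  finally show ?thesis .
qed

lemma Fc_Im: "y > 0 \<Longrightarrow> Im (Fc ap am (Complex u w) y) = ImFfun ap am u w y"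
proof -
  assume y: "y > 0"
  have Sp: "shsh ap am y > 0" using shsh_pos[OF ap am y] .
  have "Im (sin (2 * complex_of_real y * Complex u w)) = cos (2*y*u) * sinh (2*y*w)"
    by (simp add: Im_sin sinh_def)
  then have "Im (Fc ap am (Complex u w) y) = (cos (2*y*u) * sinh (2*y*w) / (2 * shsh ap am y) - w / (ap*am*y)) / y"
    unfolding Fc_def shsh_def by (simp add: mult.assoc)
  also have "\<dots> = ImFfun ap am u w y"
    unfolding ImFfun_def using Sp y ap am by (simp add: field_simps power2_eq_square)
  finally show ?thesis .
qed

lemma ImF_split: "y > 0 \<Longrightarrow> ImFfun ap am u w y = cos (2*y*u) * gfun ap am w y + (- (w/(ap*am))) * ((1 - cos (2*u*y)) / y^2)"
proof -
  assume y: "y > 0"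
  have Sp: "shsh ap am y > 0" using shsh_pos[OF ap am y] .
  show ?thesis unfolding ImFfun_def gfun_def using Sp y ap am
    by (simp add: field_simps power2_eq_square mult.commute[of u y])
qed

lemma cosg_integrable:
  assumes w: "\<bar>w\<bar> < (ap+am)/2"
  shows "set_integrable lborel {0<..} (\<lambda>y. cos (2*y*u) * gfun ap am w y)"
proof (rule set_integrable_bound[OF set_integrable_abs[OF gfun_integrable[OF ap am w]]])
  show "set_borel_measurable lborel {0<..} (\<lambda>y. cos (2*y*u) * gfun ap am w y)"
    unfolding set_borel_measurable_def gfun_def shsh_def by measurable
  show "AE x in lborel. x \<in> {0<..} \<longrightarrow> norm (cos (2*x*u) * gfun ap am w x) \<le> norm \<bar>gfun ap am w x\<bar>"
    by (auto simp: abs_mult intro!: mult_left_le_one_le)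
qed

lemma ImF_integrable:
  assumes w: "\<bar>w\<bar> < (ap+am)/2"
  shows "set_integrable lborel {0<..} (ImFfun ap am u w)"
    "(LINT y:{0<..}|lborel. ImFfun ap am u w y) = (LINT y:{0<..}|lborel. cos (2*y*u) * gfun ap am w y) - w/(ap*am) * pi * \<bar>u\<bar>"
proof -
  have i2: "set_integrable lborel {0<..} (\<lambda>y. (- (w/(ap*am))) * ((1 - cos (2*u*y)) / y^2))"
    using J_int(1)[of u] by (intro set_integrable_mult_right)
  have s: "set_integrable lborel {0<..} (\<lambda>y. cos (2*y*u) * gfun ap am w y + (- (w/(ap*am))) * ((1 - cos (2*u*y)) / y^2))"
    by (rule set_integral_add(1)[OF cosg_integrable[OF w] i2])
  have eq: "(LINT y:{0<..}|lborel. ImFfun ap am u w y) = (LINT y:{0<..}|lborel. cos (2*y*u) * gfun ap am w y + (- (w/(ap*am))) * ((1 - cos (2*u*y)) / y^2))"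
    by (rule set_lebesgue_integral_cong) (auto simp: ImF_split)
  show "set_integrable lborel {0<..} (ImFfun ap am u w)"
    using s by (subst set_integrable_cong[where f' = "\<lambda>y. cos (2*y*u) * gfun ap am w y + (- (w/(ap*am))) * ((1 - cos (2*u*y)) / y^2)"]) (auto simp: ImF_split)
  show "(LINT y:{0<..}|lborel. ImFfun ap am u w y) = (LINT y:{0<..}|lborel. cos (2*y*u) * gfun ap am w y) - w/(ap*am) * pi * \<bar>u\<bar>"
    unfolding eq set_integral_add(2)[OF cosg_integrable[OF w] i2] set_integral_mult_right J_int(2) by simp
qed

lemma Fc_integrable:
  assumes w: "\<bar>w\<bar> < (ap+am)/2"
  shows "set_integrable lborel {0<..} (Fc ap am (Complex u w))"
proof (rule set_integrable_bound)
  show "set_integrable lborel {0<..} (\<lambda>y. \<bar>ReFfun ap am u w y\<bar> + \<bar>ImFfun ap am u w y\<bar>)"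
    by (intro set_integral_add(1) set_integrable_abs ReFfun_integrable[OF ap am w] ImF_integrable(1)[OF w])
  show "set_borel_measurable lborel {0<..} (Fc ap am (Complex u w))"
    unfolding set_borel_measurable_def Fc_def by measurable
  show "AE x in lborel. x \<in> {0<..} \<longrightarrow> norm (Fc ap am (Complex u w) x) \<le> norm (\<bar>ReFfun ap am u w x\<bar> + \<bar>ImFfun ap am u w x\<bar>)"
    by (auto simp: Fc_Re[symmetric] Fc_Im[symmetric] intro: order_trans[OF cmod_le])
qed

lemma hgamma_norm_eq:
  assumes w: "\<bar>w\<bar> < (ap+am)/2"
  shows "cmod (hgamma ap am (Complex u w)) = exp (w/(ap*am) * pi * \<bar>u\<bar> - (LINT y:{0<..}|lborel. cos (2*y*u) * gfun ap am w y))"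
proof -
  have "Im (LINT y:{0<..}|lborel. Fc ap am (Complex u w) y) = (LINT y:{0<..}|lborel. Im (Fc ap am (Complex u w) y))"
    by (rule set_integral_Im[OF Fc_integrable[OF w]])
  also have "\<dots> = (LINT y:{0<..}|lborel. ImFfun ap am u w y)"
    by (rule set_lebesgue_integral_cong) (auto simp: Fc_Im)
  finally have "Im (LINT y:{0<..}|lborel. Fc ap am (Complex u w) y) = (LINT y:{0<..}|lborel. cos (2*y*u) * gfun ap am w y) - w/(ap*am) * pi * \<bar>u\<bar>"
    using ImF_integrable(2)[OF w] by simp
  then show ?thesis unfolding hgamma_Fc by simp
qed

lemma hgamma_norm:
  assumes w: "\<bar>w\<bar> < (ap+am)/2"
  shows "\<exists>M. \<forall>u. \<exists>r. \<bar>r\<bar> \<le> M \<and> cmod (hgamma ap am (Complex u w)) = exp (w/(ap*am) * pi * \<bar>u\<bar> + r)"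
proof -
  define M where "M = (LINT y:{0<..}|lborel. \<bar>gfun ap am w y\<bar>)"
  have gi: "set_integrable lborel {0<..} (\<lambda>y. \<bar>gfun ap am w y\<bar>)"
    by (rule set_integrable_abs[OF gfun_integrable[OF ap am w]])
  have gi': "set_integrable lborel {0<..} (\<lambda>y. - \<bar>gfun ap am w y\<bar>)"
    using gi unfolding set_integrable_def by simp
  have bnd: "\<bar>LINT y:{0<..}|lborel. cos (2*y*u) * gfun ap am w y\<bar> \<le> M" for u
  proof -
    have a: "(LINT y:{0<..}|lborel. cos (2*y*u) * gfun ap am w y) \<le> M" unfolding M_def
      by (rule set_integral_mono[OF cosg_integrable[OF w] gi]) (rule cmult_bounds(1), rule abs_cos_le_one)
    have b: "(LINT y:{0<..}|lborel. - \<bar>gfun ap am w y\<bar>) \<le> (LINT y:{0<..}|lborel. cos (2*y*u) * gfun ap am w y)"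
      by (rule set_integral_mono[OF gi' cosg_integrable[OF w]]) (rule cmult_bounds(2), rule abs_cos_le_one)
    have "(LINT y:{0<..}|lborel. - \<bar>gfun ap am w y\<bar>) = - M" unfolding M_def set_lebesgue_integral_def by simp
    then show ?thesis using a b by linarith
  qed
  have "\<forall>u. \<exists>r. \<bar>r\<bar> \<le> M \<and> cmod (hgamma ap am (Complex u w)) = exp (w/(ap*am) * pi * \<bar>u\<bar> + r)"
  proof
    fix u
    show "\<exists>r. \<bar>r\<bar> \<le> M \<and> cmod (hgamma ap am (Complex u w)) = exp (w/(ap*am) * pi * \<bar>u\<bar> + r)"
      using hgamma_norm_eq[OF w, of u] bnd[of u]
      by (intro exI[of _ "- (LINT y:{0<..}|lborel. cos (2*y*u) * gfun ap am w y)"]) simp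
  qed
  then show ?thesis by blast
qed

end

lemma hgammaR_norm: "cmod (hgammaR ap am z) = cmod (hgamma ap am z) * exp (- (pi * Re z * Im z / (ap*am)))"
  unfolding hgammaR_def norm_mult norm_exp_eq_Re
  by (simp add: power2_eq_square algebra_simps)

lemma hgammaL_norm: "cmod (hgammaL ap am z) = cmod (hgamma ap am z) * exp (pi * Re z * Im z / (ap*am))"
  unfolding hgammaL_def norm_mult norm_exp_eq_Re
  by (simp add: power2_eq_square algebra_simps)

lemma factor_bound:
  fixes ap am w1 w2 :: real
  assumes ap: "ap > 0" and am: "am > 0"
    and w1: "w1 < 0" "\<bar>w1\<bar> < (ap+am)/2" and w2: "w2 > 0" "\<bar>w2\<bar> < (ap+am)/2"
  shows "\<exists>C \<gamma>. C \<ge> 0 \<and> \<gamma> > 0 \<and> (\<forall>s t. cmod (hgammaR ap am (Complex s w1) / hgammaL ap am (Complex t w2))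
           \<le> C * exp (- \<gamma> * ((\<bar>s\<bar> - s) + (\<bar>t\<bar> + t))))"
proof -
  obtain M1 where M1: "\<And>u. \<exists>r. \<bar>r\<bar> \<le> M1 \<and> cmod (hgamma ap am (Complex u w1)) = exp (w1/(ap*am) * pi * \<bar>u\<bar> + r)"
    using hgamma_norm[OF ap am w1(2)] by blast
  obtain M2 where M2: "\<And>u. \<exists>r. \<bar>r\<bar> \<le> M2 \<and> cmod (hgamma ap am (Complex u w2)) = exp (w2/(ap*am) * pi * \<bar>u\<bar> + r)"
    using hgamma_norm[OF ap am w2(2)] by blast
  define \<gamma> where "\<gamma> = pi * min (- w1) w2 / (ap*am)"
  have p: "ap*am > 0" using ap am by simp
  have gp: "\<gamma> > 0" unfolding \<gamma>_def using w1 w2 p by simp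
  have "cmod (hgammaR ap am (Complex s w1) / hgammaL ap am (Complex t w2)) \<le> exp (M1 + M2) * exp (- \<gamma> * ((\<bar>s\<bar> - s) + (\<bar>t\<bar> + t)))" for s t
  proof -
    obtain r1 where r1: "\<bar>r1\<bar> \<le> M1" "cmod (hgamma ap am (Complex s w1)) = exp (w1/(ap*am) * pi * \<bar>s\<bar> + r1)"
      using M1 by blast
    obtain r2 where r2: "\<bar>r2\<bar> \<le> M2" "cmod (hgamma ap am (Complex t w2)) = exp (w2/(ap*am) * pi * \<bar>t\<bar> + r2)"
      using M2 by blast
    have "cmod (hgammaR ap am (Complex s w1) / hgammaL ap am (Complex t w2))
        = exp (w1/(ap*am) * pi * \<bar>s\<bar> + r1 - pi * s * w1 / (ap*am)) / exp (w2/(ap*am) * pi * \<bar>t\<bar> + r2 + pi * t * w2 / (ap*am))"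
      unfolding norm_divide hgammaR_norm hgammaL_norm r1 r2 by (simp add: exp_add exp_diff exp_minus field_simps)
    also have "\<dots> = exp ((w1/(ap*am) * pi * \<bar>s\<bar> + r1 - pi * s * w1 / (ap*am)) - (w2/(ap*am) * pi * \<bar>t\<bar> + r2 + pi * t * w2 / (ap*am)))"
      by (rule exp_diff[symmetric])
    also have "\<dots> = exp ((r1 - r2) + ((w1/(ap*am) * pi) * (\<bar>s\<bar> - s) - (w2/(ap*am) * pi) * (\<bar>t\<bar> + t)))"
      by (rule arg_cong[where f=exp]) (simp add: divide_inverse algebra_simps)
    also have "\<dots> \<le> exp ((M1 + M2) + (- \<gamma> * ((\<bar>s\<bar> - s) + (\<bar>t\<bar> + t))))"
    proof -
      have a: "r1 - r2 \<le> M1 + M2" using r1 r2 by linarith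
      have s0: "\<bar>s\<bar> - s \<ge> 0" "\<bar>t\<bar> + t \<ge> 0" by auto
      have "pi * min (-w1) w2 \<le> pi * (-w1)" by (intro mult_left_mono) auto
      then have "(pi * w1) / (ap*am) \<le> (- (pi * min (-w1) w2)) / (ap*am)" using p by (intro divide_right_mono) auto
      moreover have "w1/(ap*am) * pi = (pi * w1) / (ap*am)" "(- (pi * min (-w1) w2)) / (ap*am) = - (pi * min (-w1) w2 / (ap*am))" by simp_all
      ultimately have c1: "w1/(ap*am) * pi \<le> - \<gamma>" unfolding \<gamma>_def by linarith
      have "pi * min (-w1) w2 \<le> pi * w2" by (intro mult_left_mono) auto
      then have "(pi * min (-w1) w2) / (ap*am) \<le> (pi * w2) / (ap*am)" using p by (intro divide_right_mono) auto
      moreover have "w2/(ap*am) * pi = (pi * w2) / (ap*am)" by simp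
      ultimately have c2: "- (w2/(ap*am) * pi) \<le> - \<gamma>" unfolding \<gamma>_def by linarith
      have "(w1/(ap*am) * pi) * (\<bar>s\<bar> - s) \<le> (- \<gamma>) * (\<bar>s\<bar> - s)" using c1 s0 by (intro mult_right_mono)
      moreover have "- (w2/(ap*am) * pi) * (\<bar>t\<bar> + t) \<le> (- \<gamma>) * (\<bar>t\<bar> + t)"
        using c2 s0 by (intro mult_right_mono) auto
      ultimately show ?thesis using a by (simp add: algebra_simps)
    qed
    finally show ?thesis by (simp add: exp_add[symmetric])
  qed
  then show ?thesis using gp by (intro exI[of _ "exp (M1 + M2)"] exI[of _ \<gamma>]) auto
qed

lemma mod_add_small:
  fixes i m N :: nat assumes "i < N" "m < N"
  shows "(i+m) mod N = (if i+m < N then i+m else i+m-N)"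
proof (cases "i+m < N")
  case True then show ?thesis by simp
next
  case False
  then have "(i+m) mod N = (i+m-N) mod N" by (simp add: le_mod_geq)
  also have "\<dots> = i+m-N" using assms False by simp
  finally show ?thesis using False by simp
qed

lemma cyc_path:
  fixes x :: "nat \<Rightarrow> real" and N i :: nat
  assumes "i < N"
  shows "x ((i+k) mod N) - x i \<le> (\<Sum>m<k. max (x (((i+m) mod N + 1) mod N) - x ((i+m) mod N)) 0)"
proof (induction k)
  case 0 then show ?case using assms by simp
next
  case (Suc k)
  have "((i+k) mod N + 1) mod N = (i + Suc k) mod N" by (simp add: mod_Suc_eq)
  then have "x ((i + Suc k) mod N) - x ((i+k) mod N) \<le> max (x (((i+k) mod N + 1) mod N) - x ((i+k) mod N)) 0"
    by simp
  then show ?case using Suc by simp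
qed

lemma cyc_sum_le:
  fixes e :: "nat \<Rightarrow> real" and N i k :: nat
  assumes "i < N" "k \<le> N" "\<And>n. e n \<ge> 0"
  shows "(\<Sum>m<k. e ((i+m) mod N)) \<le> (\<Sum>n<N. e n)"
proof -
  have inj: "inj_on (\<lambda>m. (i+m) mod N) {..<k}"
  proof (rule inj_onI)
    fix m1 m2 assume "m1 \<in> {..<k}" "m2 \<in> {..<k}" "(i+m1) mod N = (i+m2) mod N"
    then show "m1 = m2" using mod_add_small[of i N m1] mod_add_small[of i N m2] assms
      by (auto split: if_splits)
  qed
  have "(\<Sum>m<k. e ((i+m) mod N)) = (\<Sum>n\<in>(\<lambda>m. (i+m) mod N) ` {..<k}. e n)"
    by (rule sum.reindex[OF inj, symmetric, unfolded comp_def])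
  also have "\<dots> \<le> (\<Sum>n<N. e n)"
    using assms by (intro sum_mono2) auto
  finally show ?thesis .
qed

lemma cyc_bound:
  fixes x y :: "nat \<Rightarrow> real" and N :: nat
  assumes N: "N \<ge> 1" and sx: "(\<Sum>i<N. x i) = 0"
  shows "(\<Sum>i<N. \<bar>x i\<bar>) + (\<Sum>i<N. \<bar>y i\<bar>) \<le> 3 * N * (\<Sum>n<N. (max (x ((n+1) mod N) - y n) 0 + max (y n - x n) 0))"
proof -
  define d where "d n = max (x ((n+1) mod N) - y n) 0 + max (y n - x n) 0" for n
  define P where "P = (\<Sum>n<N. d n)"
  define e where "e n = max (x ((n+1) mod N) - x n) 0" for n
  have dn: "d n \<ge> 0" for n unfolding d_def by simp
  have ed: "e n \<le> d n" for n unfolding e_def d_def by simp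
  have en: "e n \<ge> 0" for n unfolding e_def by simp
  have EP: "(\<Sum>n<N. e n) \<le> P" unfolding P_def by (intro sum_mono ed)
  have diff: "x j - x i \<le> P" if ij: "i < N" "j < N" for i j
  proof -
    define k where "k = (if i \<le> j then j - i else j + N - i)"
    have k: "k \<le> N" "(i+k) mod N = j" using ij unfolding k_def by (auto simp: le_mod_geq)
    have "x j - x i \<le> (\<Sum>m<k. e ((i+m) mod N))"
      using cyc_path[OF ij(1), of x k] k(2) unfolding e_def by simp
    also have "\<dots> \<le> (\<Sum>n<N. e n)" by (rule cyc_sum_le[OF ij(1) k(1) en])
    finally show ?thesis using EP by linarith
  qed
  have xb: "\<bar>x i\<bar> \<le> P" if i: "i < N" for i
  proof -
    have "real N * x i = (\<Sum>j<N. x i - x j)" using sx by (simp add: sum_subtractf)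
    also have "\<dots> \<le> (\<Sum>j<N. P)" using diff[of _ i] i by (intro sum_mono) auto
    finally have a: "real N * x i \<le> real N * P" by simp
    have "real N * (- x i) = (\<Sum>j<N. x j - x i)" using sx by (simp add: sum_subtractf)
    also have "\<dots> \<le> (\<Sum>j<N. P)" using diff[of i] i by (intro sum_mono) auto
    finally have b: "real N * (- x i) \<le> real N * P" by simp
    have Np: "real N > 0" using N by simp
    from a Np have "x i \<le> P" by (simp add: mult_le_cancel_left_pos)
    moreover from b Np have "- x i \<le> P" by (simp only: mult_le_cancel_left_pos)
    ultimately show ?thesis by (simp add: abs_le_iff)
  qed
  have dle: "d n \<le> P" if "n < N" for n unfolding P_def
    using that dn by (intro member_le_sum) auto
  have yb: "\<bar>y n\<bar> \<le> 2 * P" if n: "n < N" for n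
  proof -
    have n1: "(n+1) mod N < N" using N by simp
    have "y n \<le> x n + d n" unfolding d_def by simp
    moreover have "x ((n+1) mod N) - d n \<le> y n" unfolding d_def by simp
    ultimately show ?thesis using xb[OF n] xb[OF n1] dle[OF n] by (simp add: abs_le_iff)
  qed
  have "(\<Sum>i<N. \<bar>x i\<bar>) \<le> (\<Sum>i<N. P)" using xb by (intro sum_mono) auto
  moreover have "(\<Sum>i<N. \<bar>y i\<bar>) \<le> (\<Sum>i<N. 2 * P)" using yb by (intro sum_mono) auto
  moreover have "(\<Sum>i<N. P) = real N * P" "(\<Sum>i<N. 2 * P) = real N * (2 * P)" by simp_all
  ultimately have "(\<Sum>i<N. \<bar>x i\<bar>) + (\<Sum>i<N. \<bar>y i\<bar>) \<le> real N * P + real N * (2 * P)" by linarith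
  also have "\<dots> = 3 * N * P" by (simp add: algebra_simps)
  finally show ?thesis unfolding P_def d_def .
qed

lemma arg_rewrite:
  "complex_of_real A - \<i> * complex_of_real B - complex_of_real C + \<xi> = Complex (A - C + Re \<xi>) (Im \<xi> - B)"
  "complex_of_real A + \<i> * complex_of_real B + complex_of_real C + \<xi> = Complex (A + C + Re \<xi>) (Im \<xi> + B)"
  by (simp_all add: complex_eq_iff)

lemma max_shift: "max (A - c) 0 \<ge> max A 0 - \<bar>c\<bar>" "max (A + c) 0 \<ge> max A 0 - \<bar>c\<bar>" for A c :: real
  by auto

lemma abs_minus_max: "\<bar>z\<bar> - z = 2 * max (- z) 0" "\<bar>z\<bar> + z = 2 * max z 0" for z :: real
  by (auto simp: max_def abs_if)

lemma lin4: "A1 = 2*M1 \<Longrightarrow> A2 = 2*M2 \<Longrightarrow> m1 - e1 \<le> M1 \<Longrightarrow> m2 - e2 \<le> M2 \<Longrightarrow> 2*(m1+m2) - 2*(e1+e2) \<le> A1 + A2"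
  for A1 A2 M1 M2 m1 m2 e1 e2 :: real by argo

lemma kernel_bound:
  fixes ap am \<eta> :: real and N :: nat and \<xi> :: complex
  assumes ap: "ap > 0" and am: "am > 0" and N: "N \<ge> 2"
    and xi: "\<bar>Im \<xi>\<bar> < (ap + am) / 2 / 2"
  shows "\<exists>B \<delta>. B \<ge> 0 \<and> \<delta> > 0 \<and> (\<forall>x y. (\<Sum>i<N. x i) = 0 \<longrightarrow>
            cmod (kernelS ap am \<eta> N \<xi> x y) \<le> B * exp (- \<delta> * ((\<Sum>i<N. \<bar>x i\<bar>) + (\<Sum>i<N. \<bar>y i\<bar>))))"
proof -
  define a where "a = (ap + am) / 2"
  define w1 where "w1 = Im \<xi> - a/2"
  define w2 where "w2 = Im \<xi> + a/2"
  have w1: "w1 < 0" "\<bar>w1\<bar> < (ap+am)/2" and w2: "w2 > 0" "\<bar>w2\<bar> < (ap+am)/2"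
  proof -
    have h: "- ((ap+am)/4) < Im \<xi>" "Im \<xi> < (ap+am)/4" using xi abs_ge_self[of "Im \<xi>"] abs_ge_minus_self[of "Im \<xi>"] by linarith+
    show "w1 < 0" "\<bar>w1\<bar> < (ap+am)/2" "w2 > 0" "\<bar>w2\<bar> < (ap+am)/2"
      unfolding w1_def w2_def a_def abs_less_iff using h ap am by linarith+
  qed
  obtain C \<gamma> where C: "C \<ge> 0" "\<gamma> > 0"
    and CB: "\<And>s t. cmod (hgammaR ap am (Complex s w1) / hgammaL ap am (Complex t w2)) \<le> C * exp (- \<gamma> * ((\<bar>s\<bar> - s) + (\<bar>t\<bar> + t)))"
    using factor_bound[OF ap am w1 w2] by blast
  define c1 where "c1 = Re \<xi> - \<eta>/2"
  define c2 where "c2 = Re \<xi> + \<eta>/2"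
  define c where "c = \<bar>c1\<bar> + \<bar>c2\<bar>"
  define B where "B = C^N * exp (2 * \<gamma> * N * c)"
  define \<delta> where "\<delta> = 2 * \<gamma> / (3 * N)"
  have Npos: "real N > 0" using N by simp
  have bound: "cmod (kernelS ap am \<eta> N \<xi> x y) \<le> B * exp (- \<delta> * ((\<Sum>i<N. \<bar>x i\<bar>) + (\<Sum>i<N. \<bar>y i\<bar>)))"
    if sx: "(\<Sum>i<N. x i) = 0" for x y
  proof -
    define s where "s n = y n - x ((n+1) mod N) + c1" for n
    define t where "t n = y n - x n + c2" for n
    define q where "q n = (\<bar>s n\<bar> - s n) + (\<bar>t n\<bar> + t n)" for n
    define d where "d n = max (x ((n+1) mod N) - y n) 0 + max (y n - x n) 0" for n
    define S where "S = (\<Sum>i<N. \<bar>x i\<bar>) + (\<Sum>i<N. \<bar>y i\<bar>)"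
    have K: "kernelS ap am \<eta> N \<xi> x y = (\<Prod>n<N. hgammaR ap am (Complex (s n) w1) / hgammaL ap am (Complex (t n) w2))"
      unfolding kernelS_def Let_def arg_rewrite s_def t_def c1_def c2_def w1_def w2_def a_def
      by (simp add: algebra_simps)
    have "cmod (kernelS ap am \<eta> N \<xi> x y) = (\<Prod>n<N. cmod (hgammaR ap am (Complex (s n) w1) / hgammaL ap am (Complex (t n) w2)))"
      unfolding K by (rule prod_norm[symmetric])
    also have "\<dots> \<le> (\<Prod>n<N. C * exp (- \<gamma> * q n))"
      unfolding q_def by (intro prod_mono conjI CB norm_ge_zero)
    also have "\<dots> = C^N * exp (- \<gamma> * (\<Sum>n<N. q n))"
      by (simp add: prod.distrib exp_sum[symmetric] sum_distrib_left)
    also have "\<dots> \<le> C^N * exp (2 * \<gamma> * N * c - \<delta> * S)"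
    proof -
      have qn: "q n \<ge> 2 * d n - 2 * c" for n
      proof -
        have "\<bar>s n\<bar> - s n = 2 * max (x ((n+1) mod N) - y n - c1) 0" unfolding abs_minus_max by (simp add: s_def)
        moreover have "\<bar>t n\<bar> + t n = 2 * max (y n - x n + c2) 0" unfolding abs_minus_max by (simp add: t_def)
        ultimately show ?thesis unfolding q_def d_def c_def
          using max_shift(1)[of "x ((n+1) mod N) - y n" c1] max_shift(2)[of "y n - x n" c2] by (rule lin4)
      qed
      have "(\<Sum>n<N. q n) \<ge> (\<Sum>n<N. 2 * d n - 2 * c)" by (intro sum_mono qn)
      also have "(\<Sum>n<N. 2 * d n - 2 * c) = 2 * (\<Sum>n<N. d n) - 2 * N * c"
        by (simp add: sum_subtractf sum_distrib_left)
      finally have q1: "(\<Sum>n<N. q n) \<ge> 2 * (\<Sum>n<N. d n) - 2 * N * c" .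
      have "S \<le> 3 * N * (\<Sum>n<N. d n)" unfolding S_def d_def using cyc_bound[of N x y] N sx by simp
      then have "\<delta> * S \<le> \<delta> * (3 * N * (\<Sum>n<N. d n))" using C by (intro mult_left_mono) (auto simp: \<delta>_def)
      also have "\<delta> * (3 * N * (\<Sum>n<N. d n)) = 2 * \<gamma> * (\<Sum>n<N. d n)" unfolding \<delta>_def using Npos by simp
      finally have "\<delta> * S \<le> 2 * \<gamma> * (\<Sum>n<N. d n)" .
      moreover have "\<gamma> * (2 * (\<Sum>n<N. d n) - 2 * N * c) \<le> \<gamma> * (\<Sum>n<N. q n)" using q1 C by (intro mult_left_mono) auto
      ultimately have "- \<gamma> * (\<Sum>n<N. q n) \<le> 2 * \<gamma> * N * c - \<delta> * S" by (simp add: algebra_simps)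
      then show ?thesis using C by (intro mult_left_mono) auto
    qed
    also have "\<dots> = B * exp (- \<delta> * S)" unfolding B_def by (simp add: exp_diff exp_minus divide_inverse)
    finally show ?thesis unfolding S_def .
  qed
  have "B \<ge> 0" "\<delta> > 0" using C Npos unfolding B_def \<delta>_def by auto
  then show ?thesis using bound by blast
qed

definition L2 :: "'a measure \<Rightarrow> ('a \<Rightarrow> complex) \<Rightarrow> bool" where
  "L2 M f \<longleftrightarrow> f \<in> borel_measurable M \<and> integrable M (\<lambda>x. (cmod (f x))\<^sup>2)"

definition ip :: "'a measure \<Rightarrow> ('a \<Rightarrow> complex) \<Rightarrow> ('a \<Rightarrow> complex) \<Rightarrow> complex" where
  "ip M f g = (LINT x|M. f x * cnj (g x))"

lemma L2_square_integrable: "L2 M f = square_integrable M f"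
  unfolding L2_def square_integrable_def ..

lemma amgm_cmod: "cmod (a * b) \<le> (cmod a)\<^sup>2 + (cmod b)\<^sup>2"
proof -
  have "2 * (cmod a * cmod b) \<le> (cmod a)\<^sup>2 + (cmod b)\<^sup>2"
    using sum_squares_bound[of "cmod a" "cmod b"] by simp
  moreover have "cmod a * cmod b \<ge> 0" by simp
  ultimately have "cmod a * cmod b \<le> (cmod a)\<^sup>2 + (cmod b)\<^sup>2" by linarith
  then show ?thesis by (simp add: norm_mult)
qed

lemma L2_mult_integrable:
  assumes "L2 M f" "L2 M g"
  shows "integrable M (\<lambda>x. f x * g x)"
proof (rule Bochner_Integration.integrable_bound)
  show "integrable M (\<lambda>x. (cmod (f x))\<^sup>2 + (cmod (g x))\<^sup>2)"
    using assms unfolding L2_def by auto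
  have [measurable]: "f \<in> borel_measurable M" "g \<in> borel_measurable M" using assms unfolding L2_def by auto
  show "(\<lambda>x. f x * g x) \<in> borel_measurable M" by measurable
  show "AE x in M. norm (f x * g x) \<le> norm ((cmod (f x))\<^sup>2 + (cmod (g x))\<^sup>2)"
    using amgm_cmod by auto
qed

lemma borel_measurable_cnj[measurable]: "(cnj :: complex \<Rightarrow> complex) \<in> borel_measurable borel"
  by (intro borel_measurable_continuous_onI continuous_on_cnj continuous_on_id)

lemma L2_cnj: "L2 M f \<Longrightarrow> L2 M (\<lambda>x. cnj (f x))"
  unfolding L2_def by auto

lemma L2_ip_integrable: "L2 M f \<Longrightarrow> L2 M g \<Longrightarrow> integrable M (\<lambda>x. f x * cnj (g x))"
  by (intro L2_mult_integrable L2_cnj)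

lemma L2_add: assumes "L2 M f" "L2 M g" shows "L2 M (\<lambda>x. f x + g x)"
proof -
  have "integrable M (\<lambda>x. (cmod (f x + g x))\<^sup>2)"
  proof (rule Bochner_Integration.integrable_bound)
    show "integrable M (\<lambda>x. 2 * (cmod (f x))\<^sup>2 + 2 * (cmod (g x))\<^sup>2)"
      using assms unfolding L2_def by auto
    have [measurable]: "f \<in> borel_measurable M" "g \<in> borel_measurable M" using assms unfolding L2_def by auto
    show "(\<lambda>x. (cmod (f x + g x))\<^sup>2) \<in> borel_measurable M" by measurable
    show "AE x in M. norm ((cmod (f x + g x))\<^sup>2) \<le> norm (2 * (cmod (f x))\<^sup>2 + 2 * (cmod (g x))\<^sup>2)"
    proof (rule AE_I2)
      fix x
      have t: "cmod (f x + g x) \<le> cmod (f x) + cmod (g x)" by (rule norm_triangle_ineq)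
      have "(cmod (f x + g x))\<^sup>2 \<le> (cmod (f x) + cmod (g x))\<^sup>2"
        using t by (intro power_mono) auto
      also have "\<dots> \<le> 2 * (cmod (f x))\<^sup>2 + 2 * (cmod (g x))\<^sup>2"
        using sum_squares_bound[of "cmod (f x)" "cmod (g x)"] by (simp add: power2_sum)
      finally show "norm ((cmod (f x + g x))\<^sup>2) \<le> norm (2 * (cmod (f x))\<^sup>2 + 2 * (cmod (g x))\<^sup>2)" by simp
    qed
  qed
  then show ?thesis using assms unfolding L2_def by auto
qed

lemma L2_scale: "L2 M f \<Longrightarrow> L2 M (\<lambda>x. c * f x)"
  unfolding L2_def by (auto simp: norm_mult power_mult_distrib)

lemma L2_minus: "L2 M f \<Longrightarrow> L2 M (\<lambda>x. - f x)"
  using L2_scale[of M f "-1"] by simp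

lemma L2_sum: "(\<And>i. i \<in> I \<Longrightarrow> L2 M (f i)) \<Longrightarrow> L2 M (\<lambda>x. \<Sum>i\<in>I. f i x)"
proof (induction I rule: infinite_finite_induct)
  case (infinite A) then show ?case by (simp add: L2_def)
next
  case empty then show ?case by (simp add: L2_def)
next
  case (insert a A) then show ?case by (simp add: L2_add)
qed

lemma ip_add_left: "L2 M f \<Longrightarrow> L2 M g \<Longrightarrow> L2 M h \<Longrightarrow> ip M (\<lambda>x. f x + g x) h = ip M f h + ip M g h"
  unfolding ip_def by (simp add: distrib_right L2_ip_integrable)

lemma ip_minus_left: "L2 M f \<Longrightarrow> L2 M g \<Longrightarrow> L2 M h \<Longrightarrow> ip M (\<lambda>x. f x - g x) h = ip M f h - ip M g h"
  unfolding ip_def by (simp add: left_diff_distrib L2_ip_integrable)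

lemma ip_scale_left: "ip M (\<lambda>x. c * f x) h = c * ip M f h"
  unfolding ip_def by (simp add: mult.assoc)

lemma ip_sym: "ip M g f = cnj (ip M f g)"
  unfolding ip_def by (subst Bochner_Integration.integral_cnj[symmetric]) (simp add: mult.commute)

lemma ip_minus_right: "L2 M f \<Longrightarrow> L2 M g \<Longrightarrow> L2 M h \<Longrightarrow> ip M h (\<lambda>x. f x - g x) = ip M h f - ip M h g"
  by (subst (1 2 3) ip_sym) (simp add: ip_minus_left)

lemma ip_scale_right: "ip M h (\<lambda>x. c * f x) = cnj c * ip M h f"
  by (subst (1 2) ip_sym) (simp add: ip_scale_left)

lemma ip_sum_left: "(\<And>i. i \<in> I \<Longrightarrow> L2 M (f i)) \<Longrightarrow> L2 M h \<Longrightarrow> ip M (\<lambda>x. \<Sum>i\<in>I. f i x) h = (\<Sum>i\<in>I. ip M (f i) h)"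
  unfolding ip_def by (simp add: sum_distrib_right L2_ip_integrable integral_sum)

lemma ip_sum_right: "(\<And>i. i \<in> I \<Longrightarrow> L2 M (f i)) \<Longrightarrow> L2 M h \<Longrightarrow> ip M h (\<lambda>x. \<Sum>i\<in>I. f i x) = (\<Sum>i\<in>I. ip M h (f i))"
  by (subst ip_sym) (simp add: ip_sum_left ip_sym[of M h])

lemma ip_self: "ip M f f = complex_of_real (LINT x|M. (cmod (f x))\<^sup>2)"
proof -
  have "ip M f f = (LINT x|M. complex_of_real ((cmod (f x))\<^sup>2))"
    unfolding ip_def complex_norm_square ..
  also have "\<dots> = complex_of_real (LINT x|M. (cmod (f x))\<^sup>2)" by (rule integral_complex_of_real)
  finally show ?thesis .
qed

lemma bessel:
  fixes k :: "'a \<Rightarrow> complex" and e :: "nat \<Rightarrow> 'a \<Rightarrow> complex"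
  assumes k: "L2 M k" and e: "\<And>i. i < n \<Longrightarrow> L2 M (e i)"
    and ortho: "\<And>i j. i < n \<Longrightarrow> j < n \<Longrightarrow> (LINT x|M. e i x * cnj (e j x)) = (if i = j then 1 else 0)"
  shows "(\<Sum>i<n. (cmod (LINT y|M. k y * e i y))\<^sup>2) \<le> (LINT y|M. (cmod (k y))\<^sup>2)"
proof -
  define c where "c i = (LINT y|M. k y * e i y)" for i
  define f where "f i y = c i * cnj (e i y)" for i y
  define S where "S y = (\<Sum>i<n. f i y)" for y
  define h where "h y = k y - S y" for y
  have fL: "L2 M (f i)" if "i < n" for i unfolding f_def using e[OF that] by (intro L2_scale L2_cnj)
  have SL: "L2 M S" unfolding S_def using fL by (intro L2_sum) auto
  have ce: "ip M k (\<lambda>y. cnj (e i y)) = c i" for i unfolding ip_def c_def by simp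
  have ee: "ip M (\<lambda>y. cnj (e i y)) (\<lambda>y. cnj (e j y)) = (if i = j then 1 else 0)" if "i < n" "j < n" for i j
    unfolding ip_def using ortho[OF that(2,1)] by (simp add: mult.commute)
  have kf: "ip M k (f i) = complex_of_real ((cmod (c i))\<^sup>2)" for i
  proof -
    have "ip M k (f i) = cnj (c i) * ip M k (\<lambda>y. cnj (e i y))"
      unfolding f_def by (rule ip_scale_right)
    also have "\<dots> = cnj (c i) * c i" by (simp add: ce)
    finally show ?thesis unfolding complex_norm_square by (simp add: mult.commute)
  qed
  have kS: "ip M k S = (\<Sum>i<n. complex_of_real ((cmod (c i))\<^sup>2))"
  proof -
    have "ip M k S = (\<Sum>i<n. ip M k (f i))" unfolding S_def using fL k by (intro ip_sum_right) auto
    then show ?thesis by (simp add: kf)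
  qed
  have SS: "ip M S S = (\<Sum>i<n. complex_of_real ((cmod (c i))\<^sup>2))"
  proof -
    have S_eq: "(\<lambda>y. \<Sum>i<n. f i y) = S" by (rule ext) (simp add: S_def)
    have "ip M S S = (\<Sum>i<n. ip M (f i) S)"
      using ip_sum_left[of "{..<n}" M f S] fL SL unfolding S_eq by simp
    also have "\<dots> = (\<Sum>i<n. \<Sum>j<n. ip M (f i) (f j))"
    proof (intro sum.cong refl)
      fix i assume "i \<in> {..<n}"
      then show "ip M (f i) S = (\<Sum>j<n. ip M (f i) (f j))"
        using ip_sum_right[of "{..<n}" M f "f i"] fL unfolding S_eq by simp
    qed
    also have "\<dots> = (\<Sum>i<n. \<Sum>j<n. if i = j then c i * cnj (c j) else 0)"
    proof (intro sum.cong refl)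
      fix i j assume ij: "i \<in> {..<n}" "j \<in> {..<n}"
      have f_eq: "f l = (\<lambda>y. c l * cnj (e l y))" for l by (rule ext) (simp add: f_def)
      have "ip M (f i) (f j) = c i * (cnj (c j) * ip M (\<lambda>y. cnj (e i y)) (\<lambda>y. cnj (e j y)))"
        unfolding f_eq ip_scale_left ip_scale_right ..
      then show "ip M (f i) (f j) = (if i = j then c i * cnj (c j) else 0)"
        using ee[of i j] ij by simp
    qed
    also have "\<dots> = (\<Sum>i<n. complex_of_real ((cmod (c i))\<^sup>2))"
      unfolding complex_norm_square by simp
    finally show ?thesis .
  qed
  have "ip M h h = ip M k k - ip M k S - ip M S k + ip M S S"
  proof -
    have hL: "L2 M (\<lambda>y. k y - S y)"
      using L2_add[OF k L2_minus[OF SL]] by simp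
    have h_eq: "h = (\<lambda>y. k y - S y)" by (rule ext) (simp add: h_def)
    have "ip M h h = ip M k h - ip M S h" unfolding h_eq by (rule ip_minus_left[OF k SL hL])
    also have "ip M k h = ip M k k - ip M k S" unfolding h_eq by (rule ip_minus_right[OF k SL k])
    also have "ip M S h = ip M S k - ip M S S" unfolding h_eq by (rule ip_minus_right[OF k SL SL])
    finally show ?thesis by simp
  qed
  also have "\<dots> = ip M k k - (\<Sum>i<n. complex_of_real ((cmod (c i))\<^sup>2))"
    using kS SS by (subst ip_sym[of M S k]) simp
  finally have "complex_of_real (LINT y|M. (cmod (h y))\<^sup>2) = complex_of_real ((LINT y|M. (cmod (k y))\<^sup>2) - (\<Sum>i<n. (cmod (c i))\<^sup>2))"
    unfolding ip_self by simp
  then have "(LINT y|M. (cmod (h y))\<^sup>2) = (LINT y|M. (cmod (k y))\<^sup>2) - (\<Sum>i<n. (cmod (c i))\<^sup>2)"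
    using of_real_eq_iff by blast
  moreover have "(LINT y|M. (cmod (h y))\<^sup>2) \<ge> 0" by simp
  ultimately show ?thesis unfolding c_def by linarith
qed

lemma HS_general:
  fixes M :: "'a measure" and K :: "'a \<Rightarrow> 'a \<Rightarrow> complex"
  assumes sf: "sigma_finite_measure M"
    and Km[measurable]: "case_prod K \<in> borel_measurable (M \<Otimes>\<^sub>M M)"
    and fin: "(\<integral>\<^sup>+x. (\<integral>\<^sup>+y. ennreal ((cmod (K x y))\<^sup>2) \<partial>M) \<partial>M) < \<infinity>"
  shows "hilbert_schmidt_integral_op M K"
proof -
  interpret sigma_finite_measure M by (rule sf)
  define kn where "kn x = (\<integral>\<^sup>+y. ennreal ((cmod (K x y))\<^sup>2) \<partial>M)" for x
  have kn_meas[measurable]: "kn \<in> borel_measurable M"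
    unfolding kn_def[abs_def] by measurable
  have AEfin: "AE x in M. kn x \<noteq> \<infinity>"
  proof (rule nn_integral_PInf_AE[OF kn_meas])
    have "integral\<^sup>N M kn = (\<integral>\<^sup>+x. (\<integral>\<^sup>+y. ennreal ((cmod (K x y))\<^sup>2) \<partial>M) \<partial>M)"
      by (intro nn_integral_cong) (simp add: kn_def)
    then show "integral\<^sup>N M kn \<noteq> \<infinity>" using fin by simp
  qed
  have Kx_meas: "K x \<in> borel_measurable M" if "x \<in> space M" for x
    using measurable_Pair2[OF Km that] by simp
  have Kx_L2: "L2 M (K x)" if x: "x \<in> space M" "kn x \<noteq> \<infinity>" for x
  proof -
    have "integrable M (\<lambda>y. (cmod (K x y))\<^sup>2)"
    proof (rule integrableI_bounded)
      show "(\<lambda>y. (cmod (K x y))\<^sup>2) \<in> borel_measurable M" using Kx_meas[OF x(1)] by measurable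
      show "(\<integral>\<^sup>+y. ennreal (norm ((cmod (K x y))\<^sup>2)) \<partial>M) < \<infinity>"
        using x(2) by (simp add: kn_def top.not_eq_extremum)
    qed
    then show ?thesis unfolding L2_def using Kx_meas[OF x(1)] by simp
  qed
  have kn_int: "kn x = ennreal (LINT y|M. (cmod (K x y))\<^sup>2)" if x: "x \<in> space M" "kn x \<noteq> \<infinity>" for x
    unfolding kn_def using Kx_L2[OF x] unfolding L2_def by (intro nn_integral_eq_integral) auto
    have T_int: "integrable M (\<lambda>y. K x y * f y)" if f: "L2 M f" and x: "x \<in> space M" "kn x \<noteq> \<infinity>" for f x
    by (rule L2_mult_integrable[OF Kx_L2[OF x] f])
  have T_meas: "(\<lambda>x. LINT y|M. K x y * f y) \<in> borel_measurable M" if f: "L2 M f" for f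
  proof -
    have [measurable]: "f \<in> borel_measurable M" using f unfolding L2_def by simp
    show ?thesis by measurable
  qed
  have T_L2: "L2 M (\<lambda>x. LINT y|M. K x y * f y)"
    and T_bound: "(\<integral>\<^sup>+x. ennreal ((cmod (LINT y|M. K x y * f y))\<^sup>2) \<partial>M)
        \<le> (\<integral>\<^sup>+x. kn x \<partial>M) * (\<integral>\<^sup>+y. ennreal ((cmod (f y))\<^sup>2) \<partial>M)"
    if f: "L2 M f" for f
  proof -
    have fm[measurable]: "f \<in> borel_measurable M" using f unfolding L2_def by simp
    define F where "F = (\<integral>\<^sup>+y. ennreal ((cmod (f y))\<^sup>2) \<partial>M)"
    have Ffin: "F < \<infinity>"
    proof -
      have "F = ennreal (LINT y|M. (cmod (f y))\<^sup>2)" unfolding F_def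
        using f unfolding L2_def by (intro nn_integral_eq_integral) auto
      then show ?thesis by simp
    qed
    have pw: "ennreal ((cmod (LINT y|M. K x y * f y))\<^sup>2) \<le> kn x * F"
      if x: "x \<in> space M" "kn x \<noteq> \<infinity>" for x
    proof -
      have km[measurable]: "K x \<in> borel_measurable M" using Kx_meas[OF x(1)] .
      have "ennreal (cmod (LINT y|M. K x y * f y)) \<le> (\<integral>\<^sup>+y. ennreal (cmod (K x y * f y)) \<partial>M)"
        using integral_norm_bound_ennreal[OF T_int[OF f x]] by simp
      also have "\<dots> = (\<integral>\<^sup>+y. ennreal (cmod (K x y)) * ennreal (cmod (f y)) \<partial>M)"
        by (simp add: norm_mult ennreal_mult)
      finally have a: "(ennreal (cmod (LINT y|M. K x y * f y)))\<^sup>2 \<le> (\<integral>\<^sup>+y. ennreal (cmod (K x y)) * ennreal (cmod (f y)) \<partial>M)\<^sup>2"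
        by (intro power_mono) auto
      also have "\<dots> \<le> (\<integral>\<^sup>+y. (ennreal (cmod (K x y)))\<^sup>2 \<partial>M) * (\<integral>\<^sup>+y. (ennreal (cmod (f y)))\<^sup>2 \<partial>M)"
        by (rule Cauchy_Schwarz_nn_integral) measurable
      also have "\<dots> = kn x * F" unfolding kn_def F_def by (simp add: ennreal_power)
      finally show ?thesis by (simp add: ennreal_power)
    qed
    have "(\<integral>\<^sup>+x. ennreal ((cmod (LINT y|M. K x y * f y))\<^sup>2) \<partial>M) \<le> (\<integral>\<^sup>+x. kn x * F \<partial>M)"
    proof (rule nn_integral_mono_AE)
      show "AE x in M. ennreal ((cmod (LINT y|M. K x y * f y))\<^sup>2) \<le> kn x * F"
        using AEfin by (rule AE_mp[OF _ AE_I2]) (auto intro: pw)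
    qed
    also have "\<dots> = (\<integral>\<^sup>+x. kn x \<partial>M) * F" by (rule nn_integral_multc[OF kn_meas])
    finally show bnd: "(\<integral>\<^sup>+x. ennreal ((cmod (LINT y|M. K x y * f y))\<^sup>2) \<partial>M)
        \<le> (\<integral>\<^sup>+x. kn x \<partial>M) * (\<integral>\<^sup>+y. ennreal ((cmod (f y))\<^sup>2) \<partial>M)" unfolding F_def .
    have "(\<integral>\<^sup>+x. kn x \<partial>M) * F < \<infinity>" using fin Ffin unfolding kn_def by (simp add: ennreal_mult_less_top)
    then have lt: "(\<integral>\<^sup>+x. ennreal ((cmod (LINT y|M. K x y * f y))\<^sup>2) \<partial>M) < \<infinity>"
      using bnd unfolding F_def by (rule le_less_trans[rotated])
    have "integrable M (\<lambda>x. (cmod (LINT y|M. K x y * f y))\<^sup>2)"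
    proof (rule integrableI_bounded)
      show "(\<lambda>x. (cmod (LINT y|M. K x y * f y))\<^sup>2) \<in> borel_measurable M" using T_meas[OF f] by measurable
      show "(\<integral>\<^sup>+x. ennreal (norm ((cmod (LINT y|M. K x y * f y))\<^sup>2)) \<partial>M) < \<infinity>" using lt by simp
    qed
    then show "L2 M (\<lambda>x. LINT y|M. K x y * f y)" unfolding L2_def using T_meas[OF f] by simp
  qed
  have part1: "\<forall>f. square_integrable M f \<longrightarrow>
        (AE x in M. integrable M (\<lambda>y. K x y * f y)) \<and> square_integrable M (\<lambda>x. LINT y|M. K x y * f y)"
  proof (intro allI impI conjI)
    fix f assume "square_integrable M f"
    then have f: "L2 M f" unfolding L2_square_integrable .
    show "AE x in M. integrable M (\<lambda>y. K x y * f y)"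
      using AEfin by (rule AE_mp[OF _ AE_I2]) (auto intro: T_int[OF f])
    show "square_integrable M (\<lambda>x. LINT y|M. K x y * f y)"
      using T_L2[OF f] unfolding L2_square_integrable .
  qed
    define C where "C = enn2real (\<integral>\<^sup>+x. kn x \<partial>M)"
  have Cfin: "(\<integral>\<^sup>+x. kn x \<partial>M) = ennreal C"
    unfolding C_def using fin unfolding kn_def by (simp add: ennreal_enn2real_if less_top)
  have part2: "(\<Sum>e\<leftarrow>es. LINT x|M. (cmod (LINT y|M. K x y * e y))\<^sup>2) \<le> C"
    if es: "\<forall>e\<in>set es. square_integrable M e"
      and ortho: "\<forall>i<length es. \<forall>j<length es.
            (LINT x|M. (es!i) x * cnj ((es!j) x)) = (if i = j then 1 else 0)" for es :: "('a \<Rightarrow> complex) list"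
  proof -
    define n where "n = length es"
    define e where "e i = es ! i" for i
    have eL: "L2 M (e i)" if "i < n" for i
      using es that unfolding e_def n_def L2_square_integrable by auto
    define I where "I i = (LINT x|M. (cmod (LINT y|M. K x y * e i y))\<^sup>2)" for i
    have sum_eq: "(\<Sum>e\<leftarrow>es. LINT x|M. (cmod (LINT y|M. K x y * e y))\<^sup>2) = (\<Sum>i<n. I i)"
      unfolding I_def e_def n_def by (simp add: sum_list_sum_nth atLeast0LessThan)
    have Ieq: "ennreal (I i) = (\<integral>\<^sup>+x. ennreal ((cmod (LINT y|M. K x y * e i y))\<^sup>2) \<partial>M)" if i: "i < n" for i
      unfolding I_def using T_L2[OF eL[OF i]] unfolding L2_def
      by (intro nn_integral_eq_integral[symmetric]) auto
    have Tm: "(\<lambda>x. ennreal ((cmod (LINT y|M. K x y * e i y))\<^sup>2)) \<in> borel_measurable M" if i: "i < n" for i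
      using T_meas[OF eL[OF i]] by measurable
    have "ennreal (\<Sum>i<n. I i) = (\<Sum>i<n. ennreal (I i))"
      unfolding I_def by (rule sum_ennreal[symmetric]) simp
    also have "\<dots> = (\<Sum>i<n. \<integral>\<^sup>+x. ennreal ((cmod (LINT y|M. K x y * e i y))\<^sup>2) \<partial>M)"
      by (intro sum.cong refl Ieq) simp
    also have "\<dots> = (\<integral>\<^sup>+x. (\<Sum>i<n. ennreal ((cmod (LINT y|M. K x y * e i y))\<^sup>2)) \<partial>M)"
      by (rule nn_integral_sum[symmetric]) (use Tm in simp)
    also have "\<dots> \<le> (\<integral>\<^sup>+x. kn x \<partial>M)"
    proof (rule nn_integral_mono_AE)
      show "AE x in M. (\<Sum>i<n. ennreal ((cmod (LINT y|M. K x y * e i y))\<^sup>2)) \<le> kn x"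
        using AEfin
      proof (rule AE_mp[OF _ AE_I2[OF impI]])
        fix x assume x: "x \<in> space M" "kn x \<noteq> \<infinity>"
        have "(\<Sum>i<n. (cmod (LINT y|M. K x y * e i y))\<^sup>2) \<le> (LINT y|M. (cmod (K x y))\<^sup>2)"
          by (rule bessel[OF Kx_L2[OF x] eL]) (use ortho in \<open>auto simp: e_def n_def\<close>)
        then have "ennreal (\<Sum>i<n. (cmod (LINT y|M. K x y * e i y))\<^sup>2) \<le> kn x"
          using kn_int[OF x] by simp
        then show "(\<Sum>i<n. ennreal ((cmod (LINT y|M. K x y * e i y))\<^sup>2)) \<le> kn x"
          by simp
      qed
    qed
    also have "\<dots> = ennreal C" by (rule Cfin)
    finally have "ennreal (\<Sum>i<n. I i) \<le> ennreal C" .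
    moreover have "C \<ge> 0" unfolding C_def by simp
    ultimately have "(\<Sum>i<n. I i) \<le> C" by (simp add: ennreal_le_iff)
    then show ?thesis unfolding sum_eq .
  qed
  show ?thesis unfolding hilbert_schmidt_integral_op_def
    using part1 part2 by blast
qed

abbreviation PN :: "nat \<Rightarrow> (nat \<Rightarrow> real) measure" where
  "PN n \<equiv> PiM {..<n} (\<lambda>_. lborel)"

lemma exp_abs_integrable:
  fixes c :: real assumes c: "c > 0"
  shows "integrable lborel (\<lambda>t. exp (- (c * \<bar>t\<bar>)))"
proof -
  define f where "f x = indicator {0<..} x *\<^sub>R exp (-(x*c))" for x :: real
  have i1: "integrable lborel f"
    using integrable_I0i_exp_mscale[OF c] unfolding set_integrable_def f_def .
  have i2: "integrable lborel (\<lambda>x. f (0 + (-1) * x))"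
    using lborel_integrable_real_affine_iff[of "-1" f 0] i1 by simp
  have i3: "integrable lborel (\<lambda>x. f x + f (0 + (-1) * x))" using i1 i2 by simp
  show ?thesis
  proof (rule integrable_cong_AE_imp[OF i3])
    show "(\<lambda>t. exp (- (c * \<bar>t\<bar>))) \<in> borel_measurable lborel" by measurable
    show "AE x in lborel. f x + f (0 + (-1) * x) = exp (- (c * \<bar>x\<bar>))"
      using AE_lborel_singleton[of 0]
      by eventually_elim (auto simp: f_def indicator_def abs_if mult.commute)
  qed
qed

lemma exp_abs_nn_fin:
  fixes c :: real assumes c: "c > 0"
  shows "(\<integral>\<^sup>+t. ennreal (exp (- (c * \<bar>t\<bar>))) \<partial>lborel) < \<infinity>"
  using exp_abs_integrable[OF c] unfolding integrable_iff_bounded by simp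

lemma prod_exp_nn_fin:
  fixes c :: real and n :: nat assumes c: "c > 0"
  shows "(\<integral>\<^sup>+u. (\<Prod>i<n. ennreal (exp (- (c * \<bar>u i\<bar>)))) \<partial>PN n) < \<infinity>"
proof -
  interpret P: product_sigma_finite "\<lambda>_::nat. lborel :: real measure"
    by (simp add: product_sigma_finite_def sigma_finite_lborel)
  have "(\<integral>\<^sup>+u. (\<Prod>i<n. ennreal (exp (- (c * \<bar>u i\<bar>)))) \<partial>PN n)
      = (\<Prod>i<n. (\<integral>\<^sup>+t. ennreal (exp (- (c * \<bar>t\<bar>))) \<partial>lborel))"
    by (rule P.product_nn_integral_prod[of "{..<n}" "\<lambda>_ t. ennreal (exp (- (c * \<bar>t\<bar>)))"]) auto
  also have "\<dots> < \<infinity>" using exp_abs_nn_fin[OF c] by (simp add: prod_constant power_less_top_ennreal)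
  finally show ?thesis .
qed

lemma embE_measurable[measurable]: "embE N \<in> measurable (PN (N - 1)) (PN N)"
proof (unfold embE_def, rule measurable_restrict)
  fix i assume "i \<in> {..<N}"
  have c: "(\<lambda>u. u j) \<in> borel_measurable (PN (N - 1))" if "j < N - 1" for j
    using measurable_component_singleton[of j "{..<N - 1}" "\<lambda>_. lborel"] that by simp
  have s: "(\<lambda>u. - (\<Sum>j<N - 1. u j)) \<in> borel_measurable (PN (N - 1))"
    by (intro borel_measurable_uminus borel_measurable_sum c) auto
  show "(\<lambda>u. if i < N - 1 then u i else - (\<Sum>j<N - 1. u j)) \<in> measurable (PN (N - 1)) lborel"
    using c[of i] s by (cases "i < N - 1") auto
qed

lemma embE_sum: "N \<ge> 1 \<Longrightarrow> (\<Sum>i<N. embE N u i) = 0"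
proof -
  assume N: "N \<ge> 1"
  have "{..<N} = insert (N - 1) {..<N - 1}" using N by auto
  then show ?thesis unfolding embE_def using N by (simp add: sum.insert)
qed

lemma embE_abs: "N \<ge> 1 \<Longrightarrow> (\<Sum>i<N - 1. \<bar>u i\<bar>) \<le> (\<Sum>i<N. \<bar>embE N u i\<bar>)"
proof -
  assume N: "N \<ge> 1"
  have "(\<Sum>i<N - 1. \<bar>u i\<bar>) = (\<Sum>i<N - 1. \<bar>embE N u i\<bar>)"
    by (intro sum.cong) (auto simp: embE_def)
  also have "\<dots> \<le> (\<Sum>i<N. \<bar>embE N u i\<bar>)" by (intro sum_mono2) auto
  finally show ?thesis .
qed

lemma sets_lebesgueE[measurable_cong]: "sets (lebesgueE N) = sets (PN N)"
  unfolding lebesgueE_def by simp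

lemma space_lebesgueE: "space (lebesgueE N) = space (PN N)"
  unfolding lebesgueE_def by simp

lemma nn_integral_lebesgueE:
  assumes h: "h \<in> borel_measurable (PN N)"
  shows "(\<integral>\<^sup>+x. h x \<partial>lebesgueE N) = (\<integral>\<^sup>+u. ennreal (sqrt (real N)) * h (embE N u) \<partial>PN (N - 1))"
proof -
  have "(\<integral>\<^sup>+x. h x \<partial>lebesgueE N) = (\<integral>\<^sup>+x. ennreal (sqrt (real N)) * h x \<partial>distr (PN (N - 1)) (PN N) (embE N))"
    unfolding lebesgueE_def by (rule nn_integral_density) (use h in auto)
  also have "\<dots> = (\<integral>\<^sup>+u. ennreal (sqrt (real N)) * h (embE N u) \<partial>PN (N - 1))"
    by (rule nn_integral_distr[OF embE_measurable]) (use h in simp)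
  finally show ?thesis .
qed

lemma exp_sum_prod: fixes n :: nat and u :: "nat \<Rightarrow> real" shows "ennreal (exp (- (c * (\<Sum>i<n. \<bar>u i\<bar>)))) = (\<Prod>i<n. ennreal (exp (- (c * \<bar>u i\<bar>))))"
proof -
  have "exp (- (c * (\<Sum>i<n. \<bar>u i\<bar>))) = exp (\<Sum>i<n. - (c * \<bar>u i\<bar>))"
    by (simp add: sum_distrib_left sum_negf)
  also have "\<dots> = (\<Prod>i<n. exp (- (c * \<bar>u i\<bar>)))" by (rule Transcendental.exp_sum) simp
  finally show ?thesis by (simp add: prod_ennreal)
qed

lemma exp_embE_bound:
  assumes N: "N \<ge> 1" and c: "c \<ge> 0"
  shows "ennreal (exp (- (c * (\<Sum>i<N. \<bar>embE N u i\<bar>)))) \<le> (\<Prod>i<N - 1. ennreal (exp (- (c * \<bar>u i\<bar>))))"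
proof -
  have "exp (- (c * (\<Sum>i<N. \<bar>embE N u i\<bar>))) \<le> exp (- (c * (\<Sum>i<N - 1. \<bar>u i\<bar>)))"
    using embE_abs[OF N, of u] c by (simp add: mult_left_mono)
  then have "ennreal (exp (- (c * (\<Sum>i<N. \<bar>embE N u i\<bar>)))) \<le> ennreal (exp (- (c * (\<Sum>i<N - 1. \<bar>u i\<bar>))))"
    by (rule ennreal_leI)
  then show ?thesis unfolding exp_sum_prod .
qed

lemma sigma_finite_lebesgueE:
  assumes N: "N \<ge> 1"
  shows "sigma_finite_measure (lebesgueE N)"
proof -
  define A where "A k = {x \<in> space (PN N). (\<Sum>i<N. \<bar>x i\<bar>) \<le> real k}" for k :: nat
  have Am[measurable]: "A k \<in> sets (PN N)" for k unfolding A_def by measurable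
  have fin: "emeasure (lebesgueE N) (A k) \<noteq> \<infinity>" for k
  proof -
    have "emeasure (lebesgueE N) (A k) = (\<integral>\<^sup>+x. indicator (A k) x \<partial>lebesgueE N)"
      using Am by (simp add: sets_lebesgueE)
    also have "\<dots> = (\<integral>\<^sup>+u. ennreal (sqrt (real N)) * indicator (A k) (embE N u) \<partial>PN (N - 1))"
      by (rule nn_integral_lebesgueE) measurable
    also have "\<dots> \<le> (\<integral>\<^sup>+u. ennreal (sqrt (real N)) * (ennreal (exp (real k)) * (\<Prod>i<N - 1. ennreal (exp (- (1 * \<bar>u i\<bar>))))) \<partial>PN (N - 1))"
    proof (rule nn_integral_mono)
      fix u
      have "indicator (A k) (embE N u) \<le> ennreal (exp (real k)) * (\<Prod>i<N - 1. ennreal (exp (- (1 * \<bar>u i\<bar>))))"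
      proof (cases "embE N u \<in> A k")
        case True
        then have s: "(\<Sum>i<N. \<bar>embE N u i\<bar>) \<le> real k" unfolding A_def by simp
        have "exp (real k) * exp (- (1 * (\<Sum>i<N. \<bar>embE N u i\<bar>))) \<ge> 1"
          using s by (simp add: exp_minus field_simps)
        then have "ennreal 1 \<le> ennreal (exp (real k)) * ennreal (exp (- (1 * (\<Sum>i<N. \<bar>embE N u i\<bar>))))"
          by (simp add: ennreal_mult[symmetric] ennreal_leI)
        also have "\<dots> \<le> ennreal (exp (real k)) * (\<Prod>i<N - 1. ennreal (exp (- (1 * \<bar>u i\<bar>))))"
          by (intro mult_left_mono exp_embE_bound N) auto
        finally show ?thesis using True by simp
      qed simp
      then show "ennreal (sqrt (real N)) * indicator (A k) (embE N u) \<le> ennreal (sqrt (real N)) * (ennreal (exp (real k)) * (\<Prod>i<N - 1. ennreal (exp (- (1 * \<bar>u i\<bar>)))))"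
        by (intro mult_left_mono) auto
    qed
    also have "\<dots> = ennreal (sqrt (real N)) * ennreal (exp (real k)) * (\<integral>\<^sup>+u. (\<Prod>i<N - 1. ennreal (exp (- (1 * \<bar>u i\<bar>)))) \<partial>PN (N - 1))"
      by (simp add: nn_integral_cmult mult.assoc)
    also have "\<dots> < \<infinity>" using prod_exp_nn_fin[of 1 "N - 1"]
      by (simp add: ennreal_mult_less_top)
    finally show ?thesis by simp
  qed
  show ?thesis
  proof (unfold sigma_finite_measure_def, intro exI[of _ "range A"] conjI)
    show "countable (range A)" by simp
    show "range A \<subseteq> sets (lebesgueE N)" using Am by (auto simp: sets_lebesgueE)
    show "\<Union> (range A) = space (lebesgueE N)"
    proof
      show "\<Union> (range A) \<subseteq> space (lebesgueE N)" by (auto simp: A_def space_lebesgueE)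
      show "space (lebesgueE N) \<subseteq> \<Union> (range A)"
      proof
        fix x assume x: "x \<in> space (lebesgueE N)"
        obtain k :: nat where "(\<Sum>i<N. \<bar>x i\<bar>) \<le> real k" using real_arch_simple by blast
        then show "x \<in> \<Union> (range A)" using x by (auto simp: A_def space_lebesgueE)
      qed
    qed
    show "\<forall>a\<in>range A. emeasure (lebesgueE N) a \<noteq> \<infinity>" using fin by auto
  qed
qed

lemma hgamma_measurable[measurable]: "hgamma ap am \<in> borel_measurable borel"
proof -
  have "(\<lambda>z. LINT y:{0<..}|lborel. Fc ap am z y) \<in> borel_measurable borel"
    unfolding set_lebesgue_integral_def Fc_def by measurable
  then show ?thesis unfolding hgamma_Fc[abs_def] by measurable
qed

lemma hgammaR_measurable[measurable]: "hgammaR ap am \<in> borel_measurable borel"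
  unfolding hgammaR_def[abs_def] by measurable

lemma hgammaL_measurable[measurable]: "hgammaL ap am \<in> borel_measurable borel"
  unfolding hgammaL_def[abs_def] by measurable

lemma kernelS_meas_PN:
  assumes N: "N \<ge> 1"
  shows "case_prod (kernelS ap am \<eta> N \<xi>) \<in> borel_measurable (PN N \<Otimes>\<^sub>M PN N)"
proof -
  have c: "(\<lambda>p. fst p i) \<in> borel_measurable (PN N \<Otimes>\<^sub>M PN N)" "(\<lambda>p. snd p i) \<in> borel_measurable (PN N \<Otimes>\<^sub>M PN N)"
    if "i < N" for i
    using measurable_compose[OF measurable_fst measurable_component_singleton[of i "{..<N}" "\<lambda>_. lborel"]]
      measurable_compose[OF measurable_snd measurable_component_singleton[of i "{..<N}" "\<lambda>_. lborel"]] that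
    by auto
  show ?thesis
    unfolding kernelS_def[abs_def] Let_def case_prod_beta'
  proof (intro borel_measurable_prod)
    fix n assume n: "n \<in> {..<N}"
    have n1: "(n + 1) mod N < N" using N by simp
    show "(\<lambda>p. hgammaR ap am (complex_of_real (snd p n - fst p ((n + 1) mod N)) - \<i> * complex_of_real ((ap + am) / 2 / 2)
                              - complex_of_real (\<eta> / 2) + \<xi>) /
           hgammaL ap am (complex_of_real (snd p n - fst p n) + \<i> * complex_of_real ((ap + am) / 2 / 2)
                              + complex_of_real (\<eta> / 2) + \<xi>)) \<in> borel_measurable (PN N \<Otimes>\<^sub>M PN N)"
      using c[of n] c[OF n1] n by measurable
  qed
qed


lemma kernelS_meas_E:
  assumes N: "N \<ge> 1"
  shows "case_prod (kernelS ap am \<eta> N \<xi>) \<in> borel_measurable (lebesgueE N \<Otimes>\<^sub>M lebesgueE N)"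
  by (subst measurable_cong_sets[OF sets_pair_measure_cong[OF sets_lebesgueE sets_lebesgueE] refl])
     (rule kernelS_meas_PN[OF N])

lemma kernelS_meas_PE:
  assumes N: "N \<ge> 1"
  shows "case_prod (\<lambda>x y. ennreal ((cmod (kernelS ap am \<eta> N \<xi> x y))\<^sup>2)) \<in> borel_measurable (PN N \<Otimes>\<^sub>M lebesgueE N)"
proof -
  have "(\<lambda>p. ennreal ((cmod (case_prod (kernelS ap am \<eta> N \<xi>) p))\<^sup>2)) \<in> borel_measurable (PN N \<Otimes>\<^sub>M PN N)"
    using kernelS_meas_PN[OF N] by measurable
  then have "(\<lambda>p. ennreal ((cmod (case_prod (kernelS ap am \<eta> N \<xi>) p))\<^sup>2)) \<in> borel_measurable (PN N \<Otimes>\<^sub>M lebesgueE N)"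
    by (subst measurable_cong_sets[OF sets_pair_measure_cong[OF refl sets_lebesgueE] refl])
  then show ?thesis by (simp add: case_prod_beta')
qed

lemma kernelS_L2_fin:
  fixes ap am \<eta> :: real and N :: nat and \<xi> :: complex
  assumes ap: "ap > 0" and am: "am > 0" and N: "N \<ge> 2"
    and xi: "\<bar>Im \<xi>\<bar> < (ap + am) / 2 / 2"
  shows "(\<integral>\<^sup>+x. (\<integral>\<^sup>+y. ennreal ((cmod (kernelS ap am \<eta> N \<xi> x y))\<^sup>2) \<partial>lebesgueE N) \<partial>lebesgueE N) < \<infinity>"
proof -
  have N1: "N \<ge> 1" using N by simp
  obtain B \<delta> where B: "B \<ge> 0" "\<delta> > 0"
    and KB: "\<And>x y. (\<Sum>i<N. x i) = 0 \<Longrightarrow> cmod (kernelS ap am \<eta> N \<xi> x y) \<le> B * exp (- \<delta> * ((\<Sum>i<N. \<bar>x i\<bar>) + (\<Sum>i<N. \<bar>y i\<bar>)))"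
    using kernel_bound[OF ap am N xi] by blast
  define K where "K = kernelS ap am \<eta> N \<xi>"
  define c where "c = 2 * \<delta>"
  have cp: "c > 0" using B unfolding c_def by simp
  define G where "G = (\<integral>\<^sup>+u. (\<Prod>i<N - 1. ennreal (exp (- (c * \<bar>u i\<bar>)))) \<partial>PN (N - 1))"
  have Gfin: "G < \<infinity>" unfolding G_def by (rule prod_exp_nn_fin[OF cp])
  define Iy where "Iy = (\<integral>\<^sup>+y. ennreal (exp (- (c * (\<Sum>i<N. \<bar>y i\<bar>)))) \<partial>lebesgueE N)"
  have Iy_le: "Iy \<le> ennreal (sqrt (real N)) * G"
  proof -
    have "Iy = (\<integral>\<^sup>+u. ennreal (sqrt (real N)) * ennreal (exp (- (c * (\<Sum>i<N. \<bar>embE N u i\<bar>)))) \<partial>PN (N - 1))"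
      unfolding Iy_def by (rule nn_integral_lebesgueE) measurable
    also have "\<dots> \<le> (\<integral>\<^sup>+u. ennreal (sqrt (real N)) * (\<Prod>i<N - 1. ennreal (exp (- (c * \<bar>u i\<bar>)))) \<partial>PN (N - 1))"
      using exp_embE_bound[OF N1] cp by (intro nn_integral_mono mult_left_mono) auto
    also have "\<dots> = ennreal (sqrt (real N)) * G" unfolding G_def by (rule nn_integral_cmult) measurable
    finally show ?thesis .
  qed
  have sq: "ennreal ((cmod (K x y))\<^sup>2) \<le> ennreal (B\<^sup>2 * exp (- (c * (\<Sum>i<N. \<bar>x i\<bar>)))) * ennreal (exp (- (c * (\<Sum>i<N. \<bar>y i\<bar>))))"
    if sx: "(\<Sum>i<N. x i) = 0" for x y
  proof -
    have "(cmod (K x y))\<^sup>2 \<le> (B * exp (- \<delta> * ((\<Sum>i<N. \<bar>x i\<bar>) + (\<Sum>i<N. \<bar>y i\<bar>))))\<^sup>2"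
      using KB[OF sx, of y] unfolding K_def by (intro power_mono) auto
    also have "\<dots> = B\<^sup>2 * exp (- (c * (\<Sum>i<N. \<bar>x i\<bar>))) * exp (- (c * (\<Sum>i<N. \<bar>y i\<bar>)))"
      unfolding c_def by (simp add: power_mult_distrib exp_add[symmetric] power2_eq_square exp_double[symmetric] algebra_simps)
    finally show ?thesis by (simp add: ennreal_mult[symmetric] ennreal_leI)
  qed
  have inner: "(\<integral>\<^sup>+y. ennreal ((cmod (K x y))\<^sup>2) \<partial>lebesgueE N) \<le> ennreal (B\<^sup>2 * exp (- (c * (\<Sum>i<N. \<bar>x i\<bar>)))) * Iy"
    if sx: "(\<Sum>i<N. x i) = 0" for x
  proof -
    have "(\<integral>\<^sup>+y. ennreal ((cmod (K x y))\<^sup>2) \<partial>lebesgueE N) \<le> (\<integral>\<^sup>+y. ennreal (B\<^sup>2 * exp (- (c * (\<Sum>i<N. \<bar>x i\<bar>)))) * ennreal (exp (- (c * (\<Sum>i<N. \<bar>y i\<bar>)))) \<partial>lebesgueE N)"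
      by (intro nn_integral_mono sq[OF sx])
    also have "\<dots> = ennreal (B\<^sup>2 * exp (- (c * (\<Sum>i<N. \<bar>x i\<bar>)))) * Iy"
      unfolding Iy_def by (rule nn_integral_cmult) (simp add: measurable_cong_sets[OF sets_lebesgueE refl])
    finally show ?thesis .
  qed
  interpret sE: sigma_finite_measure "lebesgueE N" by (rule sigma_finite_lebesgueE[OF N1])
  have inner_meas: "(\<lambda>x. \<integral>\<^sup>+y. ennreal ((cmod (K x y))\<^sup>2) \<partial>lebesgueE N) \<in> borel_measurable (PN N)"
    unfolding K_def by (rule sE.borel_measurable_nn_integral[OF kernelS_meas_PE[OF N1]])
  have "(\<integral>\<^sup>+x. (\<integral>\<^sup>+y. ennreal ((cmod (K x y))\<^sup>2) \<partial>lebesgueE N) \<partial>lebesgueE N)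
      = (\<integral>\<^sup>+u. ennreal (sqrt (real N)) * (\<integral>\<^sup>+y. ennreal ((cmod (K (embE N u) y))\<^sup>2) \<partial>lebesgueE N) \<partial>PN (N - 1))"
    by (rule nn_integral_lebesgueE[OF inner_meas])
  also have "\<dots> \<le> (\<integral>\<^sup>+u. ennreal (sqrt (real N)) * (ennreal (B\<^sup>2) * Iy) * (\<Prod>i<N - 1. ennreal (exp (- (c * \<bar>u i\<bar>)))) \<partial>PN (N - 1))"
  proof (rule nn_integral_mono)
    fix u
    have "(\<integral>\<^sup>+y. ennreal ((cmod (K (embE N u) y))\<^sup>2) \<partial>lebesgueE N) \<le> ennreal (B\<^sup>2 * exp (- (c * (\<Sum>i<N. \<bar>embE N u i\<bar>)))) * Iy"
      by (rule inner[OF embE_sum[OF N1]])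
    also have "\<dots> = ennreal (B\<^sup>2) * Iy * ennreal (exp (- (c * (\<Sum>i<N. \<bar>embE N u i\<bar>))))"
      by (simp add: ennreal_mult ennreal_power mult_ac)
    also have "\<dots> \<le> ennreal (B\<^sup>2) * Iy * (\<Prod>i<N - 1. ennreal (exp (- (c * \<bar>u i\<bar>))))"
      using exp_embE_bound[OF N1, of c u] cp by (intro mult_left_mono) auto
    finally show "ennreal (sqrt (real N)) * (\<integral>\<^sup>+y. ennreal ((cmod (K (embE N u) y))\<^sup>2) \<partial>lebesgueE N)
        \<le> ennreal (sqrt (real N)) * (ennreal (B\<^sup>2) * Iy) * (\<Prod>i<N - 1. ennreal (exp (- (c * \<bar>u i\<bar>))))"
      by (simp add: mult_left_mono mult.assoc)
  qed
  also have "\<dots> = ennreal (sqrt (real N)) * (ennreal (B\<^sup>2) * Iy) * G"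
    unfolding G_def by (rule nn_integral_cmult) measurable
  also have "\<dots> < \<infinity>"
    using Gfin Iy_le by (simp add: ennreal_mult_less_top ennreal_power[symmetric] le_less_trans
        ennreal_mult_less_top[of "ennreal (sqrt (real N))" G])
  finally show ?thesis unfolding K_def .
qed

theorem theoremB1:
  fixes ap am \<eta> :: real and N :: nat and \<xi> :: complex
  assumes "ap > 0" and "am > 0" and "N \<ge> 2"
    and "\<bar>Im \<xi>\<bar> < (ap + am) / 2 / 2"
  shows "hilbert_schmidt_integral_op (lebesgueE N) (kernelS ap am \<eta> N \<xi>)"
proof -
  have N1: "N \<ge> 1" using assms(3) by simp
  show ?thesis
    by (rule HS_general[OF sigma_finite_lebesgueE[OF N1] kernelS_meas_E[OF N1] kernelS_L2_fin[OF assms]])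
qed

end
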